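(* Let $(G_n)_{n\in\mathbb N}$ be a sequence of groups all of the same cardinality $\kappa$. Then $|\mathcal A(G_n)|=\kappa^{\aleph_0}$. Consequently the isomorphism classes of archipelago groups do not form a set. In particular, for ordinals $\alpha\ge 0$, if $F_\alpha$ denotes the free group on $\beth_{\alpha+1}$ generators, then the groups $\mathcal A(F_\alpha)$ are pairwise non-isomorphic.
   Context: For a sequence of groups $(G_n)_{n\in\mathbb N}$, an infinite word is a map $w:L\to\bigsqcup_n (G_n\setminus\{1\})$ from a countable linearly ordered set $L$ such that $w^{-1}(G_n)$ is finite for every $n$. Two infinite words are equivalent if for every $m$ their restrictions to the letters from $G_1,\dots,G_m$ represent the same element of $G_1*\cdots*G_m$. The topologist's product $\circledast_n G_n$ is the group of equivalence classes, with multiplication induced by concatenation and inversion by reversing the order and inverting each letter. The free product $*_n G_n$ is the subgroup of classes of finite words. The archipelago group is $\mathcal A(G_n):=\circledast_n G_n/\langle\langle *_n G_n\rangle\rangle$; $\mathcal A(G)$ denotes the case $G_n=G$ for all $n$. $\beth_0=\aleph_0$, $\beth_{\alpha+1}=2^{\beth_\alpha}$. *)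

theory Defs
  imports "HOL-Algebra.Algebra" "HOL-Library.Equipollence" "HOL-Library.FuncSet"
begin

text \<open>A countable linearly ordered index set is represented (up to order isomorphism,
  which is no loss since every countable linear order embeds into the rationals)
  by a subset of the rationals with their usual order.\<close>

type_synonym 'a iword = "rat set \<times> (rat \<Rightarrow> nat \<times> 'a)"

definition letters :: "(nat \<Rightarrow> 'a monoid) \<Rightarrow> (nat \<times> 'a) set" where
  "letters G = {(n, g). g \<in> carrier (G n) \<and> g \<noteq> \<one>\<^bsub>G n\<^esub>}"

definition inf_words :: "(nat \<Rightarrow> 'a monoid) \<Rightarrow> 'a iword set" where
  "inf_words G = {(L, w). w ` L \<subseteq> letters G \<and> (\<forall>n. finite {i \<in> L. fst (w i) = n})}"

definition restr :: "'a iword \<Rightarrow> nat \<Rightarrow> (nat \<times> 'a) list" where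
  "restr u m = map (snd u) (sorted_list_of_set {i \<in> fst u. fst (snd u i) \<le> m})"

text \<open>Left multiplication of a reduced word by a letter (van der Waerden normal form).\<close>
fun fp_insert :: "(nat \<Rightarrow> 'a monoid) \<Rightarrow> nat \<times> 'a \<Rightarrow> (nat \<times> 'a) list \<Rightarrow> (nat \<times> 'a) list" where
  "fp_insert G (n, g) [] = (if g = \<one>\<^bsub>G n\<^esub> then [] else [(n, g)])"
| "fp_insert G (n, g) ((k, h) # xs) =
     (if n = k then (if g \<otimes>\<^bsub>G n\<^esub> h = \<one>\<^bsub>G n\<^esub> then xs else (n, g \<otimes>\<^bsub>G n\<^esub> h) # xs)
      else if g = \<one>\<^bsub>G n\<^esub> then (k, h) # xs else (n, g) # (k, h) # xs)"

text \<open>The reduced form of a finite word; two finite words represent the same element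
  of the free product iff their reduced forms agree.\<close>
definition fp_reduce :: "(nat \<Rightarrow> 'a monoid) \<Rightarrow> (nat \<times> 'a) list \<Rightarrow> (nat \<times> 'a) list" where
  "fp_reduce G xs = foldr (fp_insert G) xs []"

definition word_equiv :: "(nat \<Rightarrow> 'a monoid) \<Rightarrow> 'a iword \<Rightarrow> 'a iword \<Rightarrow> bool" where
  "word_equiv G u v \<longleftrightarrow> (\<forall>m. fp_reduce G (restr u m) = fp_reduce G (restr v m))"

definition tp_class :: "(nat \<Rightarrow> 'a monoid) \<Rightarrow> 'a iword \<Rightarrow> 'a iword set" where
  "tp_class G u = {v \<in> inf_words G. word_equiv G u v}"

text \<open>Order embeddings of the rationals onto parts of the negative / positive rationals.\<close>
definition emb_left :: "rat \<Rightarrow> rat" where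
  "emb_left x = (if x \<le> 0 then x - 1 else - 1 / (1 + x))"

definition emb_right :: "rat \<Rightarrow> rat" where
  "emb_right x = - emb_left (- x)"

definition w_concat :: "'a iword \<Rightarrow> 'a iword \<Rightarrow> 'a iword" where
  "w_concat u v =
     (emb_left ` fst u \<union> emb_right ` fst v,
      \<lambda>q. if q < 0 then snd u (the_inv emb_left q) else snd v (the_inv emb_right q))"

definition w_inv :: "(nat \<Rightarrow> 'a monoid) \<Rightarrow> 'a iword \<Rightarrow> 'a iword" where
  "w_inv G u = (uminus ` fst u,
     \<lambda>q. (fst (snd u (- q)), inv\<^bsub>G (fst (snd u (- q)))\<^esub> snd (snd u (- q))))"

definition topologists_product :: "(nat \<Rightarrow> 'a monoid) \<Rightarrow> 'a iword set monoid" where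
  "topologists_product G =
     \<lparr>carrier = tp_class G ` inf_words G,
      Group.monoid.mult = (\<lambda>P Q. tp_class G (w_concat (SOME u. u \<in> P) (SOME v. v \<in> Q))),
      one = tp_class G ({}, (\<lambda>_. undefined))\<rparr>"

text \<open>The free product as the subgroup of classes of finite words.\<close>
definition free_product_sub :: "(nat \<Rightarrow> 'a monoid) \<Rightarrow> 'a iword set set" where
  "free_product_sub G = tp_class G ` {u \<in> inf_words G. finite (fst u)}"

definition normal_closure :: "('b, 'c) monoid_scheme \<Rightarrow> 'b set \<Rightarrow> 'b set" where
  "normal_closure H S =
     generate H {g \<otimes>\<^bsub>H\<^esub> s \<otimes>\<^bsub>H\<^esub> inv\<^bsub>H\<^esub> g | g s. g \<in> carrier H \<and> s \<in> S}"

definition archipelago :: "(nat \<Rightarrow> 'a monoid) \<Rightarrow> 'a iword set set monoid" where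
  "archipelago G = topologists_product G Mod normal_closure (topologists_product G) (free_product_sub G)"

fun fg_insert :: "'x \<times> bool \<Rightarrow> ('x \<times> bool) list \<Rightarrow> ('x \<times> bool) list" where
  "fg_insert (x, b) [] = [(x, b)]"
| "fg_insert (x, b) ((y, c) # ys) = (if x = y \<and> b \<noteq> c then ys else (x, b) # (y, c) # ys)"

definition fg_reduce :: "('x \<times> bool) list \<Rightarrow> ('x \<times> bool) list" where
  "fg_reduce xs = foldr fg_insert xs []"

text \<open>The free group on the set X: reduced words in the letters x^{+1}, x^{-1} (x in X).\<close>
definition free_group :: "'x set \<Rightarrow> ('x \<times> bool) list monoid" where
  "free_group S = \<lparr>carrier = {ws. (\<forall>p \<in> set ws. fst p \<in> S) \<and> fg_reduce ws = ws},
                   Group.monoid.mult = (\<lambda>u v. fg_reduce (u @ v)), one = Nil\<rparr>"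

definition wo_less :: "'o rel \<Rightarrow> 'o \<Rightarrow> 'o \<Rightarrow> bool" where
  "wo_less r b a \<longleftrightarrow> (b, a) \<in> r \<and> b \<noteq> a"

definition wo_min :: "'o rel \<Rightarrow> 'o \<Rightarrow> bool" where
  "wo_min r a \<longleftrightarrow> a \<in> Field r \<and> (\<forall>b \<in> Field r. (a, b) \<in> r)"

definition wo_succ :: "'o rel \<Rightarrow> 'o \<Rightarrow> 'o \<Rightarrow> bool" where
  "wo_succ r b a \<longleftrightarrow> wo_less r b a \<and> \<not> (\<exists>c. wo_less r b c \<and> wo_less r c a)"

definition wo_limit :: "'o rel \<Rightarrow> 'o \<Rightarrow> bool" where
  "wo_limit r a \<longleftrightarrow> a \<in> Field r \<and> \<not> wo_min r a \<and> \<not> (\<exists>b. wo_succ r b a)"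

text \<open>B a has cardinality beth_alpha, where alpha is the order type of the initial
  segment of r below a: beth_0 = aleph_0, beth_(alpha+1) = 2^beth_alpha, and
  beth_lambda = sup of the earlier beths at limits.\<close>
definition beth_seq :: "'o rel \<Rightarrow> ('o \<Rightarrow> 'c set) \<Rightarrow> bool" where
  "beth_seq r B \<longleftrightarrow>
     (\<forall>a. wo_min r a \<longrightarrow> B a \<approx> (UNIV :: nat set)) \<and>
     (\<forall>a b. wo_succ r b a \<longrightarrow> B a \<approx> Pow (B b)) \<and>
     (\<forall>a. wo_limit r a \<longrightarrow>
         (\<forall>b. wo_less r b a \<longrightarrow> B b \<lesssim> B a) \<and>
         (\<forall>C :: 'c set. (\<forall>b. wo_less r b a \<longrightarrow> B b \<lesssim> C) \<longrightarrow> B a \<lesssim> C))"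

end

theory Submission
  imports Defs "HOL-Library.Countable"
begin


definition valid :: "(nat \<Rightarrow> 'a monoid) \<Rightarrow> (nat \<times> 'a) list \<Rightarrow> bool" where
  "valid G xs \<longleftrightarrow> (\<forall>p\<in>set xs. snd p \<in> carrier (G (fst p)))"

fun red :: "(nat \<Rightarrow> 'a monoid) \<Rightarrow> (nat \<times> 'a) list \<Rightarrow> bool" where
  "red G [] = True"
| "red G [(n,g)] = (g \<in> carrier (G n) \<and> g \<noteq> \<one>\<^bsub>G n\<^esub>)"
| "red G ((n,g)#(k,h)#xs) = (g \<in> carrier (G n) \<and> g \<noteq> \<one>\<^bsub>G n\<^esub> \<and> n \<noteq> k \<and> red G ((k,h)#xs))"

lemma valid_simps[simp]: "valid G [] " "valid G ((n,g)#xs) \<longleftrightarrow> g \<in> carrier (G n) \<and> valid G xs"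
  "valid G (xs @ ys) \<longleftrightarrow> valid G xs \<and> valid G ys"
  by (auto simp: valid_def)

lemma red_tl: "red G (x#xs) \<Longrightarrow> red G xs"
  by (cases x; cases xs) auto

lemma red_valid: "red G xs \<Longrightarrow> valid G xs"
  by (induction G xs rule: red.induct) auto

lemma red_cons: "red G ((n,g)#xs) \<longleftrightarrow> g \<in> carrier (G n) \<and> g \<noteq> \<one>\<^bsub>G n\<^esub> \<and> (xs = [] \<or> fst (hd xs) \<noteq> n) \<and> red G xs"
  by (cases xs) auto

context
  fixes G :: "nat \<Rightarrow> 'a monoid"
  assumes grp: "\<And>n. group (G n)"
begin

lemma ins_red: assumes g: "g \<in> carrier (G n)" and r: "red G ys" shows "red G (fp_insert G (n,g) ys)"
proof (cases ys)
  case Nil then show ?thesis using g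
    by simp
next
  case (Cons y ys')
  obtain k h where y: "y = (k,h)" by fastforce
  have r': "red G ys'" using r Cons red_tl by blast
  have h: "h \<in> carrier (G k)" "h \<noteq> \<one>\<^bsub>G k\<^esub>" using r Cons y by (auto simp: red_cons)
  have hd': "ys' = [] \<or> fst (hd ys') \<noteq> k" using r Cons y by (auto simp: red_cons)
  show ?thesis
  proof (cases "n = k")
    case True
    have hn: "h \<in> carrier (G n)" using h True by simp
    have gh: "g \<otimes>\<^bsub>G n\<^esub> h \<in> carrier (G n)" using g hn by (simp add: monoid.m_closed[OF group.is_monoid[OF grp]])
    show ?thesis
    proof (cases "g \<otimes>\<^bsub>G n\<^esub> h = \<one>\<^bsub>G n\<^esub>")
      case True then show ?thesis using Cons y \<open>n = k\<close> r' by simp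
    next
      case False then show ?thesis using Cons y \<open>n = k\<close> r' gh hd' by (simp add: red_cons)
    qed
  next
    case False
    then show ?thesis using Cons y g h r r' hd' by (auto simp: red_cons)
  qed
qed

lemma ins_one: assumes r: "red G ys" shows "fp_insert G (n, \<one>\<^bsub>G n\<^esub>) ys = ys"
proof (cases ys)
  case (Cons y ys')
  obtain k h where y: "y = (k,h)" by fastforce
  have h: "h \<in> carrier (G k)" "h \<noteq> \<one>\<^bsub>G k\<^esub>" using r Cons y by (auto simp: red_cons)
  show ?thesis using Cons y h by (auto simp: group.is_monoid[OF grp])
qed simp

lemma ins_mult:
  assumes g: "g \<in> carrier (G n)" and h: "h \<in> carrier (G n)" and r: "red G ys"
  shows "fp_insert G (n,g) (fp_insert G (n,h) ys) = fp_insert G (n, g \<otimes>\<^bsub>G n\<^esub> h) ys"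
proof (cases ys)
  case Nil
  then show ?thesis using g h grp[of n]
    by (auto simp: group.is_monoid)
next
  case (Cons y ys')
  obtain k c where y: "y = (k,c)" by fastforce
  have r': "red G ys'" using r Cons red_tl by blast
  have c: "c \<in> carrier (G k)" "c \<noteq> \<one>\<^bsub>G k\<^esub>" using r Cons y by (auto simp: red_cons)
  have hd': "ys' = [] \<or> fst (hd ys') \<noteq> k" using r Cons y by (auto simp: red_cons)
  interpret Gn: group "G n" by (rule grp)
  show ?thesis
  proof (cases "n = k")
    case True
    note nk = True
    show ?thesis
    proof (cases "h \<otimes>\<^bsub>G n\<^esub> c = \<one>\<^bsub>G n\<^esub>")
      case True
      have cn: "c \<in> carrier (G n)" using c nk by simp
      have "g \<otimes>\<^bsub>G n\<^esub> h \<otimes>\<^bsub>G n\<^esub> c = g \<otimes>\<^bsub>G n\<^esub> (h \<otimes>\<^bsub>G n\<^esub> c)"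
        using g h cn by (simp add: Gn.m_assoc)
      then have "g \<otimes>\<^bsub>G n\<^esub> h \<otimes>\<^bsub>G n\<^esub> c = g"
        using True g by simp
      moreover have "fp_insert G (n,g) ys' = (if g = \<one>\<^bsub>G n\<^esub> then ys' else (n,g)#ys')"
        using hd' nk by (cases ys') auto
      ultimately show ?thesis using True Cons y nk by auto
    next
      case False
      have cn: "c \<in> carrier (G n)" using c nk by simp
      have "g \<otimes>\<^bsub>G n\<^esub> h \<otimes>\<^bsub>G n\<^esub> c = g \<otimes>\<^bsub>G n\<^esub> (h \<otimes>\<^bsub>G n\<^esub> c)"
        using g h cn by (simp add: Gn.m_assoc)
      then show ?thesis using Cons y nk[symmetric] False by simp
    qed
  next
    case False
    show ?thesis
    proof (cases "h = \<one>\<^bsub>G n\<^esub>")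
      case True then show ?thesis using Cons y False g by auto
    next
      case hn: False
      show ?thesis
      proof (cases "g \<otimes>\<^bsub>G n\<^esub> h = \<one>\<^bsub>G n\<^esub>")
        case True then show ?thesis using Cons y False hn g h by auto
      next
        case gh: False
        show ?thesis
        proof (cases "g = \<one>\<^bsub>G n\<^esub>")
          case True then show ?thesis using Cons y False hn g h by auto
        next
          case False then show ?thesis using Cons y \<open>n \<noteq> k\<close> hn gh g h by auto
        qed
      qed
    qed
  qed
qed

end


lemma fp_reduce_Nil[simp]: "fp_reduce G [] = []" by (simp add: fp_reduce_def)
lemma fp_reduce_Cons[simp]: "fp_reduce G (x#xs) = fp_insert G x (fp_reduce G xs)" by (simp add: fp_reduce_def)
lemma fp_reduce_append: "fp_reduce G (xs @ ys) = foldr (fp_insert G) xs (fp_reduce G ys)"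
  by (simp add: fp_reduce_def)

context
  fixes G :: "nat \<Rightarrow> 'a monoid"
  assumes grp: "\<And>n. group (G n)"
begin

lemma foldr_red: "valid G xs \<Longrightarrow> red G zs \<Longrightarrow> red G (foldr (fp_insert G) xs zs)"
proof (induction xs)
  case (Cons x xs)
  obtain n g where x: "x = (n,g)" by fastforce
  show ?case using Cons x ins_red[OF grp] by auto
qed simp

lemma red_reduce: "valid G xs \<Longrightarrow> red G (fp_reduce G xs)"
  using foldr_red[of xs "[]"] by (simp add: fp_reduce_def)

lemma reduce_red: "red G ys \<Longrightarrow> fp_reduce G ys = ys"
proof (induction ys)
  case (Cons y ys)
  obtain n g where y: "y = (n,g)" by fastforce
  have r: "red G ys" using Cons.prems red_tl by blast
  have g: "g \<noteq> \<one>\<^bsub>G n\<^esub>" "ys = [] \<or> fst (hd ys) \<noteq> n" using Cons.prems y by (auto simp: red_cons)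
  show ?case
  proof (cases ys)
    case Nil then show ?thesis using y g by simp
  next
    case (Cons z zs)
    obtain k h where z: "z = (k,h)" by fastforce
    show ?thesis using Cons.IH[OF r] Cons z y g \<open>ys = z # zs\<close> by auto
  qed
qed simp

lemma foldr_ins:
  assumes g: "g \<in> carrier (G n)" and ys: "red G ys" and zs: "red G zs"
  shows "foldr (fp_insert G) (fp_insert G (n,g) ys) zs = fp_insert G (n,g) (foldr (fp_insert G) ys zs)"
proof (cases ys)
  case Nil
  then show ?thesis using ins_one[OF grp zs] by auto
next
  case (Cons y ys')
  obtain k h where y: "y = (k,h)" by fastforce
  have r': "red G ys'" using ys Cons red_tl by blast
  have h: "h \<in> carrier (G k)" "h \<noteq> \<one>\<^bsub>G k\<^esub>" using ys Cons y by (auto simp: red_cons)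
  define R where "R = foldr (fp_insert G) ys' zs"
  have R: "red G R" unfolding R_def using foldr_red r' zs red_valid by blast
  have fy: "foldr (fp_insert G) ys zs = fp_insert G (k,h) R" using Cons y R_def by simp
  show ?thesis
  proof (cases "n = k")
    case True
    have hn: "h \<in> carrier (G n)" using h True by simp
    have m: "fp_insert G (n,g) (fp_insert G (n,h) R) = fp_insert G (n, g \<otimes>\<^bsub>G n\<^esub> h) R"
      using ins_mult[OF grp g hn R] .
    show ?thesis
    proof (cases "g \<otimes>\<^bsub>G n\<^esub> h = \<one>\<^bsub>G n\<^esub>")
      case c: True
      show ?thesis using Cons y True[symmetric] c m ins_one[OF grp R, of n] R_def by simp
    next
      case c: False
      show ?thesis using Cons y True[symmetric] c m R_def by simp
    qed
  next
    case False
    show ?thesis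
    proof (cases "g = \<one>\<^bsub>G n\<^esub>")
      case True
      have rr: "red G (foldr (fp_insert G) ys zs)" using foldr_red ys zs red_valid by blast
      show ?thesis using Cons y False True ins_one[OF grp rr, of n] by simp
    next
      case c: False
      show ?thesis using Cons y False c by simp
    qed
  qed
qed

lemma foldr_reduce: "valid G xs \<Longrightarrow> red G zs \<Longrightarrow>
   foldr (fp_insert G) (fp_reduce G xs) zs = foldr (fp_insert G) xs zs"
proof (induction xs)
  case (Cons x xs)
  obtain n g where x: "x = (n,g)" by fastforce
  have v: "valid G xs" "g \<in> carrier (G n)" using Cons.prems x by auto
  have "foldr (fp_insert G) (fp_reduce G (x#xs)) zs = fp_insert G (n,g) (foldr (fp_insert G) (fp_reduce G xs) zs)"
    using foldr_ins[OF v(2) red_reduce[OF v(1)] Cons.prems(2)] x by simp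
  then show ?case using Cons.IH[OF v(1) Cons.prems(2)] x by simp
qed simp

lemma reduce_reduce: "valid G xs \<Longrightarrow> fp_reduce G (fp_reduce G xs) = fp_reduce G xs"
  using reduce_red red_reduce by blast

lemma reduce_append: "valid G xs \<Longrightarrow> valid G ys \<Longrightarrow>
   fp_reduce G (xs @ ys) = fp_reduce G (fp_reduce G xs @ fp_reduce G ys)"
  by (simp add: fp_reduce_append reduce_reduce foldr_reduce red_reduce)

lemma reduce_append_left: "valid G xs \<Longrightarrow> valid G ys \<Longrightarrow>
   fp_reduce G (xs @ ys) = fp_reduce G (fp_reduce G xs @ ys)"
  by (metis reduce_append reduce_reduce red_reduce red_valid)

lemma reduce_append_right: "valid G xs \<Longrightarrow> valid G ys \<Longrightarrow>
   fp_reduce G (xs @ ys) = fp_reduce G (xs @ fp_reduce G ys)"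
  by (metis reduce_append reduce_reduce red_reduce red_valid)

end


definition invl :: "(nat \<Rightarrow> 'a monoid) \<Rightarrow> (nat \<times> 'a) list \<Rightarrow> (nat \<times> 'a) list" where
  "invl G xs = rev (map (\<lambda>(n,g). (n, inv\<^bsub>G n\<^esub> g)) xs)"

lemma invl_Nil[simp]: "invl G [] = []" by (simp add: invl_def)
lemma invl_Cons[simp]: "invl G ((n,g)#xs) = invl G xs @ [(n, inv\<^bsub>G n\<^esub> g)]" by (simp add: invl_def)
lemma invl_append: "invl G (xs @ ys) = invl G ys @ invl G xs" by (simp add: invl_def)
lemma filter_invl: "filter (\<lambda>l. P (fst l)) (invl G xs) = invl G (filter (\<lambda>l. P (fst l)) xs)"
  by (induction xs) (auto simp: invl_def rev_filter[symmetric] filter_map comp_def split: prod.splits)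

context
  fixes G :: "nat \<Rightarrow> 'a monoid"
  assumes grp: "\<And>n. group (G n)"
begin

lemma valid_invl: "valid G xs \<Longrightarrow> valid G (invl G xs)"
proof (induction xs)
  case (Cons x xs)
  obtain n g where x: "x = (n,g)" by fastforce
  show ?case using Cons x group.inv_closed[OF grp] by auto
qed simp

lemma invl_invl: "valid G xs \<Longrightarrow> invl G (invl G xs) = xs"
proof (induction xs)
  case (Cons x xs)
  obtain n g where x: "x = (n,g)" by fastforce
  show ?case using Cons x group.inv_inv[OF grp] by (auto simp: invl_append)
qed simp

lemma reduce_filter_ins:
  assumes g: "g \<in> carrier (G n)" and ys: "red G ys"
  shows "fp_reduce G (filter (\<lambda>l. P (fst l)) (fp_insert G (n,g) ys)) =
     (if P n then fp_insert G (n,g) (fp_reduce G (filter (\<lambda>l. P (fst l)) ys))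
      else fp_reduce G (filter (\<lambda>l. P (fst l)) ys))"
proof (cases ys)
  case Nil
  then show ?thesis by simp
next
  case (Cons y ys')
  obtain k h where y: "y = (k,h)" by fastforce
  have r': "red G ys'" using ys Cons red_tl by blast
  have h: "h \<in> carrier (G k)" using ys Cons y by (auto simp: red_cons)
  define R where "R = fp_reduce G (filter (\<lambda>l. P (fst l)) ys')"
  have R: "red G R" unfolding R_def
    by (rule red_reduce[OF grp]) (use red_valid[OF r'] in \<open>auto simp: valid_def\<close>)
  show ?thesis
  proof (cases "n = k")
    case True
    have hn: "h \<in> carrier (G n)" using h True by simp
    have m: "fp_insert G (n,g) (fp_insert G (n,h) R) = fp_insert G (n, g \<otimes>\<^bsub>G n\<^esub> h) R"
      using ins_mult[OF grp g hn R] .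
    show ?thesis
      using Cons y True[symmetric] m ins_one[OF grp R, of n] R_def by auto
  next
    case False
    have rr: "red G (fp_reduce G (filter (\<lambda>l. P (fst l)) ys))"
      by (rule red_reduce[OF grp]) (use red_valid[OF ys] in \<open>auto simp: valid_def\<close>)
    show ?thesis using Cons y False ins_one[OF grp rr, of n] by auto
  qed
qed

lemma reduce_filter: "valid G xs \<Longrightarrow>
  fp_reduce G (filter (\<lambda>l. P (fst l)) xs) = fp_reduce G (filter (\<lambda>l. P (fst l)) (fp_reduce G xs))"
proof (induction xs)
  case (Cons x xs)
  obtain n g where x: "x = (n,g)" by fastforce
  have v: "valid G xs" "g \<in> carrier (G n)" using Cons.prems x by auto
  show ?case using Cons.IH[OF v(1)] reduce_filter_ins[OF v(2) red_reduce[OF grp v(1)], of P] x by simp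
qed simp

lemma reduce_cancel: "valid G xs \<Longrightarrow> valid G ys \<Longrightarrow> fp_reduce G (xs @ invl G xs @ ys) = fp_reduce G ys"
proof (induction xs arbitrary: ys)
  case (Cons x xs)
  obtain n g where x: "x = (n,g)" by fastforce
  have v: "valid G xs" "g \<in> carrier (G n)" using Cons.prems x by auto
  have ig: "inv\<^bsub>G n\<^esub> g \<in> carrier (G n)" using group.inv_closed[OF grp v(2)] .
  have "fp_reduce G ((x#xs) @ invl G (x#xs) @ ys) = fp_insert G (n,g) (fp_reduce G (xs @ invl G xs @ ((n, inv\<^bsub>G n\<^esub> g) # ys)))"
    using x by simp
  also have "\<dots> = fp_insert G (n,g) (fp_insert G (n, inv\<^bsub>G n\<^esub> g) (fp_reduce G ys))"
    using Cons.IH[OF v(1)] Cons.prems(2) ig by simp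
  also have "\<dots> = fp_insert G (n, g \<otimes>\<^bsub>G n\<^esub> inv\<^bsub>G n\<^esub> g) (fp_reduce G ys)"
    using ins_mult[OF grp v(2) ig red_reduce[OF grp Cons.prems(2)]] .
  also have "\<dots> = fp_reduce G ys"
    using ins_one[OF grp red_reduce[OF grp Cons.prems(2)]] group.r_inv[OF grp v(2)] by simp
  finally show ?case .
qed simp

lemma reduce_cancel': "valid G xs \<Longrightarrow> valid G ys \<Longrightarrow> fp_reduce G (invl G xs @ xs @ ys) = fp_reduce G ys"
  using reduce_cancel[OF valid_invl] invl_invl by metis

end


lemma sls_eq:
  fixes A :: "'b::linorder set"
  assumes "finite A" "sorted_wrt (<) xs" "set xs = A"
  shows "sorted_list_of_set A = xs"
  using assms strict_sorted_equal strict_sorted_list_of_set set_sorted_list_of_set by metis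

lemma sls_image:
  fixes f :: "'b::linorder \<Rightarrow> 'c::linorder"
  assumes "finite A" "strict_mono f"
  shows "sorted_list_of_set (f ` A) = map f (sorted_list_of_set A)"
proof (rule sls_eq)
  show "sorted_wrt (<) (map f (sorted_list_of_set A))"
    unfolding sorted_wrt_map
    by (rule sorted_wrt_mono_rel[OF _ strict_sorted_list_of_set[of A]]) (use assms in \<open>auto simp: strict_mono_def\<close>)
qed (use assms in auto)

lemma sls_image_anti:
  fixes f :: "'b::linorder \<Rightarrow> 'c::linorder"
  assumes "finite A" "\<And>x y. x < y \<Longrightarrow> f y < f x"
  shows "sorted_list_of_set (f ` A) = rev (map f (sorted_list_of_set A))"
proof (rule sls_eq)
  show "sorted_wrt (<) (rev (map f (sorted_list_of_set A)))"
    unfolding sorted_wrt_rev sorted_wrt_map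
    by (rule sorted_wrt_mono_rel[OF _ strict_sorted_list_of_set[of A]]) (use assms in auto)
qed (use assms in auto)

lemma sls_union:
  fixes A :: "'b::linorder set"
  assumes "finite A" "finite B" "\<And>a b. a \<in> A \<Longrightarrow> b \<in> B \<Longrightarrow> a < b"
  shows "sorted_list_of_set (A \<union> B) = sorted_list_of_set A @ sorted_list_of_set B"
proof (rule sls_eq)
  show "sorted_wrt (<) (sorted_list_of_set A @ sorted_list_of_set B)"
    using assms strict_sorted_list_of_set[of A] strict_sorted_list_of_set[of B]
    by (auto simp: sorted_wrt_append)
qed (use assms in auto)

lemma emb_left_mono: "strict_mono emb_left"
proof (rule strict_monoI)
  fix x y :: rat assume "x < y"
  show "emb_left x < emb_left y"
  proof (cases "y \<le> 0")
    case True then show ?thesis using \<open>x<y\<close> by (simp add: emb_left_def)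
  next
    case False
    have a: "- 1 < - 1 / (1 + y)" using False by (simp add: field_simps)
    moreover have "x > 0 \<Longrightarrow> - 1 / (1 + x) < - 1 / (1 + y)" using \<open>x<y\<close> by (simp add: field_simps)
    moreover have "x \<le> 0 \<Longrightarrow> x - 1 < - 1 / (1 + y)" using a by linarith
    ultimately show ?thesis using False \<open>x<y\<close> by (auto simp: emb_left_def)
  qed
qed

lemma emb_left_neg: "emb_left x < 0"
  by (auto simp: emb_left_def field_simps)

lemma emb_right_mono: "strict_mono emb_right"
  using emb_left_mono by (auto simp: strict_mono_def emb_right_def)

lemma emb_right_pos: "emb_right x > 0"
  using emb_left_neg[of "-x"] by (simp add: emb_right_def)

lemma emb_not[simp]: "\<not> emb_right x < 0" "emb_left x < 0"
  using emb_right_pos[of x] emb_left_neg[of x] by auto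

lemma the_inv_emb_left[simp]: "the_inv emb_left (emb_left x) = x"
  by (rule the_inv_f_f[OF strict_mono_imp_inj_on[OF emb_left_mono]])

lemma the_inv_emb_right[simp]: "the_inv emb_right (emb_right x) = x"
  by (rule the_inv_f_f[OF strict_mono_imp_inj_on[OF emb_right_mono]])

definition rset :: "'a iword \<Rightarrow> nat \<Rightarrow> rat set" where
  "rset u m = {i \<in> fst u. fst (snd u i) \<le> m}"

lemma restr_rset: "restr u m = map (snd u) (sorted_list_of_set (rset u m))"
  by (simp add: restr_def rset_def)

lemma finite_rset: assumes "u \<in> inf_words G" shows "finite (rset u m)"
proof -
  have "rset u m = (\<Union>n\<le>m. {i \<in> fst u. fst (snd u i) = n})" by (auto simp: rset_def)
  then show ?thesis using assms by (auto simp: inf_words_def)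
qed

lemma restr_letters: assumes "u \<in> inf_words G" shows "set (restr u m) \<subseteq> letters G"
proof -
  have "set (sorted_list_of_set (rset u m)) = rset u m" using finite_rset[OF assms] by simp
  then show ?thesis using assms by (auto simp: restr_rset rset_def inf_words_def)
qed

lemma valid_restr: assumes "u \<in> inf_words G" shows "valid G (restr u m)"
  using restr_letters[OF assms, of m] by (auto simp: valid_def letters_def)

lemma rset_concat: "rset (w_concat u v) m = emb_left ` rset u m \<union> emb_right ` rset v m"
  using emb_left_neg emb_right_pos
  by (auto simp: rset_def w_concat_def image_iff)

lemma restr_concat: assumes "u \<in> inf_words G" "v \<in> inf_words G"
  shows "restr (w_concat u v) m = restr u m @ restr v m"
proof -
  have "sorted_list_of_set (rset (w_concat u v) m) =
     map emb_left (sorted_list_of_set (rset u m)) @ map emb_right (sorted_list_of_set (rset v m))"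
    unfolding rset_concat
    using finite_rset[OF assms(1)] finite_rset[OF assms(2)] emb_left_neg emb_right_pos
    by (subst sls_union) (auto simp: sls_image emb_left_mono emb_right_mono intro: less_trans[of _ 0])
  then show ?thesis using emb_left_neg emb_right_pos
    by (simp add: restr_rset w_concat_def comp_def)
qed

lemma rset_inv: "rset (w_inv G u) m = uminus ` rset u m"
  by (auto simp: rset_def w_inv_def image_iff)

lemma restr_inv: assumes "u \<in> inf_words G"
  shows "restr (w_inv G u) m = invl G (restr u m)"
proof -
  have "sorted_list_of_set (rset (w_inv G u) m) = rev (map uminus (sorted_list_of_set (rset u m)))"
    unfolding rset_inv by (rule sls_image_anti) (use finite_rset[OF assms] in auto)
  then show ?thesis
    by (simp add: restr_rset w_inv_def invl_def rev_map comp_def case_prod_beta)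
qed

lemma concat_words: assumes "u \<in> inf_words G" "v \<in> inf_words G" shows "w_concat u v \<in> inf_words G"
proof -
  have "{i \<in> fst (w_concat u v). fst (snd (w_concat u v) i) = n} =
     emb_left ` {i \<in> fst u. fst (snd u i) = n} \<union> emb_right ` {i \<in> fst v. fst (snd v i) = n}" for n
    using emb_left_neg emb_right_pos
    by (auto simp: w_concat_def image_iff)
  then show ?thesis using assms emb_left_neg emb_right_pos
    by (auto simp: inf_words_def w_concat_def)
qed

lemma inv_words: assumes "u \<in> inf_words G" "\<And>n. group (G n)" shows "w_inv G u \<in> inf_words G"
proof -
  have "{i \<in> fst (w_inv G u). fst (snd (w_inv G u) i) = n} = uminus ` {i \<in> fst u. fst (snd u i) = n}" for n
    by (auto simp: w_inv_def image_iff)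
  moreover have "snd (w_inv G u) ` fst (w_inv G u) \<subseteq> letters G"
  proof
    fix l assume "l \<in> snd (w_inv G u) ` fst (w_inv G u)"
    then obtain i where i: "i \<in> fst u" "l = (fst (snd u i), inv\<^bsub>G (fst (snd u i))\<^esub> snd (snd u i))"
      by (auto simp: w_inv_def)
    have "snd u i \<in> letters G" using assms i by (auto simp: inf_words_def)
    then show "l \<in> letters G" using i group.inv_closed[OF assms(2)] group.inv_eq_1_iff[OF assms(2)]
      by (auto simp: letters_def)
  qed
  ultimately show ?thesis using assms by (auto simp: inf_words_def)
qed


definition rep :: "'b set \<Rightarrow> 'b" where "rep P = (SOME u. u \<in> P)"

definition RR :: "(nat \<Rightarrow> 'a monoid) \<Rightarrow> 'a iword \<Rightarrow> nat \<Rightarrow> (nat \<times> 'a) list" where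
  "RR G u m = fp_reduce G (restr u m)"

lemma word_equiv_RR: "word_equiv G u v \<longleftrightarrow> RR G u = RR G v"
  by (auto simp: word_equiv_def RR_def fun_eq_iff)

lemma tp_class_mem: "u \<in> inf_words G \<Longrightarrow> u \<in> tp_class G u"
  by (simp add: tp_class_def word_equiv_def)

lemma tp_class_eq: "u \<in> inf_words G \<Longrightarrow> v \<in> inf_words G \<Longrightarrow> tp_class G u = tp_class G v \<longleftrightarrow> RR G u = RR G v"
proof
  assume u: "u \<in> inf_words G" and v: "v \<in> inf_words G" and e: "tp_class G u = tp_class G v"
  have "v \<in> tp_class G u" using e tp_class_mem[OF v] by simp
  then show "RR G u = RR G v" by (simp add: tp_class_def word_equiv_RR)
next
  assume "RR G u = RR G v"
  then show "tp_class G u = tp_class G v" by (simp add: tp_class_def word_equiv_RR)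
qed

lemma tp_carrier: "carrier (topologists_product G) = tp_class G ` inf_words G"
  by (simp add: topologists_product_def)

lemma rep_class: assumes "u \<in> inf_words G"
  shows "rep (tp_class G u) \<in> inf_words G" "RR G (rep (tp_class G u)) = RR G u"
proof -
  have "rep (tp_class G u) \<in> tp_class G u" unfolding rep_def
    by (rule someI[of "\<lambda>x. x \<in> tp_class G u"]) (rule tp_class_mem[OF assms])
  then show "rep (tp_class G u) \<in> inf_words G" "RR G (rep (tp_class G u)) = RR G u"
    by (auto simp: tp_class_def word_equiv_RR)
qed

lemma rep_carrier: assumes "P \<in> carrier (topologists_product G)"
  shows "rep P \<in> inf_words G" "P = tp_class G (rep P)"
proof -
  obtain u where u: "u \<in> inf_words G" "P = tp_class G u" using assms by (auto simp: tp_carrier)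
  show "rep P \<in> inf_words G" using rep_class(1)[OF u(1)] u(2) by simp
  show "P = tp_class G (rep P)" using u rep_class[OF u(1)] tp_class_eq[of u G "rep P"] by simp
qed

lemma tp_mult: "P \<otimes>\<^bsub>topologists_product G\<^esub> Q = tp_class G (w_concat (rep P) (rep Q))"
  by (simp add: topologists_product_def rep_def)

lemma tp_one: "\<one>\<^bsub>topologists_product G\<^esub> = tp_class G ({}, \<lambda>_. undefined)"
  by (simp add: topologists_product_def)

lemma empty_word: "({}, \<lambda>_. undefined) \<in> inf_words G"
  by (simp add: inf_words_def)

lemma RR_empty: "RR G ({}, \<lambda>_. undefined) m = []"
  by (simp add: RR_def restr_def)

definition Rc :: "(nat \<Rightarrow> 'a monoid) \<Rightarrow> 'a iword set \<Rightarrow> nat \<Rightarrow> (nat \<times> 'a) list" where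
  "Rc G P = RR G (rep P)"

lemma Rc_class: "u \<in> inf_words G \<Longrightarrow> Rc G (tp_class G u) = RR G u"
  by (simp add: Rc_def rep_class)

lemma tp_eq_iff: "P \<in> carrier (topologists_product G) \<Longrightarrow> Q \<in> carrier (topologists_product G) \<Longrightarrow>
  P = Q \<longleftrightarrow> Rc G P = Rc G Q"
proof -
  assume P: "P \<in> carrier (topologists_product G)" and Q: "Q \<in> carrier (topologists_product G)"
  have "P = Q \<longleftrightarrow> tp_class G (rep P) = tp_class G (rep Q)"
    using rep_carrier(2)[OF P] rep_carrier(2)[OF Q] by metis
  then show ?thesis using tp_class_eq[OF rep_carrier(1)[OF P] rep_carrier(1)[OF Q]] by (simp add: Rc_def)
qed

context
  fixes G :: "nat \<Rightarrow> 'a monoid"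
  assumes grp: "\<And>n. group (G n)"
begin

lemma red_RR: "u \<in> inf_words G \<Longrightarrow> red G (RR G u m)"
  by (simp add: RR_def red_reduce[OF grp] valid_restr)

lemma valid_RR: "u \<in> inf_words G \<Longrightarrow> valid G (RR G u m)"
  by (simp add: red_RR red_valid)

lemma RR_concat: "u \<in> inf_words G \<Longrightarrow> v \<in> inf_words G \<Longrightarrow>
   RR G (w_concat u v) m = fp_reduce G (RR G u m @ RR G v m)"
  by (simp add: RR_def restr_concat reduce_append[OF grp] valid_restr)

lemma RR_inv: "u \<in> inf_words G \<Longrightarrow> RR G (w_inv G u) m = fp_reduce G (invl G (restr u m))"
  by (simp add: RR_def restr_inv)

abbreviation "TP \<equiv> topologists_product G"

lemma tp_mult_closed: "P \<in> carrier TP \<Longrightarrow> Q \<in> carrier TP \<Longrightarrow> P \<otimes>\<^bsub>TP\<^esub> Q \<in> carrier TP"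
proof -
  assume P: "P \<in> carrier TP" and Q: "Q \<in> carrier TP"
  have "w_concat (rep P) (rep Q) \<in> inf_words G" using concat_words rep_carrier(1)[OF P] rep_carrier(1)[OF Q] .
  then show ?thesis unfolding tp_mult tp_carrier by blast
qed

lemma Rc_mult: "P \<in> carrier TP \<Longrightarrow> Q \<in> carrier TP \<Longrightarrow>
   Rc G (P \<otimes>\<^bsub>TP\<^esub> Q) m = fp_reduce G (Rc G P m @ Rc G Q m)"
proof -
  assume P: "P \<in> carrier TP" and Q: "Q \<in> carrier TP"
  have c: "w_concat (rep P) (rep Q) \<in> inf_words G" using concat_words rep_carrier(1)[OF P] rep_carrier(1)[OF Q] .
  show ?thesis unfolding tp_mult Rc_class[OF c] RR_concat[OF rep_carrier(1)[OF P] rep_carrier(1)[OF Q]]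
    by (simp add: Rc_def)
qed

lemma Rc_one: "Rc G \<one>\<^bsub>TP\<^esub> m = []"
  by (simp add: tp_one Rc_class empty_word RR_empty)

lemma red_Rc: "P \<in> carrier TP \<Longrightarrow> red G (Rc G P m)"
  by (simp add: Rc_def red_RR rep_carrier(1))

lemma valid_Rc: "P \<in> carrier TP \<Longrightarrow> valid G (Rc G P m)"
  by (simp add: red_Rc red_valid)

lemma tp_group: "group TP"
proof (rule groupI)
  show "P \<otimes>\<^bsub>TP\<^esub> Q \<in> carrier TP" if "P \<in> carrier TP" "Q \<in> carrier TP" for P Q
    using tp_mult_closed that .
  show one: "\<one>\<^bsub>TP\<^esub> \<in> carrier TP" by (simp add: tp_one tp_carrier empty_word)
  show "P \<otimes>\<^bsub>TP\<^esub> Q \<otimes>\<^bsub>TP\<^esub> S = P \<otimes>\<^bsub>TP\<^esub> (Q \<otimes>\<^bsub>TP\<^esub> S)"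
    if "P \<in> carrier TP" "Q \<in> carrier TP" "S \<in> carrier TP" for P Q S
  proof -
    have "Rc G (P \<otimes>\<^bsub>TP\<^esub> Q \<otimes>\<^bsub>TP\<^esub> S) m = Rc G (P \<otimes>\<^bsub>TP\<^esub> (Q \<otimes>\<^bsub>TP\<^esub> S)) m" for m
    proof -
      let ?a = "Rc G P m" and ?b = "Rc G Q m" and ?c = "Rc G S m"
      have v: "valid G ?a" "valid G ?b" "valid G ?c" using that valid_Rc by auto
      have "Rc G (P \<otimes>\<^bsub>TP\<^esub> Q \<otimes>\<^bsub>TP\<^esub> S) m = fp_reduce G (fp_reduce G (?a @ ?b) @ ?c)"
        using that by (simp add: Rc_mult tp_mult_closed)
      also have "\<dots> = fp_reduce G ((?a @ ?b) @ ?c)"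
        using reduce_append_left[OF grp, where xs="?a @ ?b" and ys="?c"] v by simp
      also have "\<dots> = fp_reduce G (?a @ fp_reduce G (?b @ ?c))"
        using reduce_append_right[OF grp, where xs="?a" and ys="?b @ ?c"] v by simp
      also have "\<dots> = Rc G (P \<otimes>\<^bsub>TP\<^esub> (Q \<otimes>\<^bsub>TP\<^esub> S)) m"
        using that by (simp add: Rc_mult tp_mult_closed)
      finally show ?thesis .
    qed
    then have "Rc G (P \<otimes>\<^bsub>TP\<^esub> Q \<otimes>\<^bsub>TP\<^esub> S) = Rc G (P \<otimes>\<^bsub>TP\<^esub> (Q \<otimes>\<^bsub>TP\<^esub> S))" by (rule ext)
    then show ?thesis by (subst tp_eq_iff) (simp_all add: that tp_mult_closed)
  qed
  show "\<one>\<^bsub>TP\<^esub> \<otimes>\<^bsub>TP\<^esub> P = P" if "P \<in> carrier TP" for P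
  proof -
    have "Rc G (\<one>\<^bsub>TP\<^esub> \<otimes>\<^bsub>TP\<^esub> P) m = Rc G P m" for m
      using that one by (simp add: Rc_mult Rc_one reduce_red[OF grp red_Rc[OF that]])
    then have "Rc G (\<one>\<^bsub>TP\<^esub> \<otimes>\<^bsub>TP\<^esub> P) = Rc G P" by (rule ext)
    then show ?thesis by (subst tp_eq_iff) (simp_all add: that one tp_mult_closed)
  qed
  show "\<exists>Q\<in>carrier TP. Q \<otimes>\<^bsub>TP\<^esub> P = \<one>\<^bsub>TP\<^esub>" if "P \<in> carrier TP" for P
  proof -
    have u: "rep P \<in> inf_words G" using rep_carrier(1)[OF that] .
    define Q where "Q = tp_class G (w_inv G (rep P))"
    have iu: "w_inv G (rep P) \<in> inf_words G" using inv_words[OF u grp] .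
    have Q: "Q \<in> carrier TP" using iu by (simp add: Q_def tp_carrier)
    have "Rc G (Q \<otimes>\<^bsub>TP\<^esub> P) m = Rc G \<one>\<^bsub>TP\<^esub> m" for m
    proof -
      have "Rc G (Q \<otimes>\<^bsub>TP\<^esub> P) m = fp_reduce G (fp_reduce G (invl G (restr (rep P) m)) @ fp_reduce G (restr (rep P) m))"
        using Q that by (simp add: Rc_mult Q_def Rc_class iu RR_inv) (simp add: Rc_def RR_def restr_inv[OF u])
      also have "\<dots> = fp_reduce G (invl G (restr (rep P) m) @ restr (rep P) m @ [])"
        using valid_restr[OF u] valid_invl[OF grp] by (simp add: reduce_append[OF grp, symmetric])
      also have "\<dots> = []" using reduce_cancel'[OF grp valid_restr[OF u], where ys="[]"] by simp
      finally show ?thesis by (simp add: Rc_one)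
    qed
    then have "Rc G (Q \<otimes>\<^bsub>TP\<^esub> P) = Rc G \<one>\<^bsub>TP\<^esub>" by (rule ext)
    then have "Q \<otimes>\<^bsub>TP\<^esub> P = \<one>\<^bsub>TP\<^esub>" by (subst tp_eq_iff) (simp_all add: that Q one tp_mult_closed)
    then show ?thesis using Q by blast
  qed
qed

end


definition beta :: "(nat \<Rightarrow> 'a monoid) \<Rightarrow> nat \<Rightarrow> 'a iword set \<Rightarrow> nat \<Rightarrow> (nat \<times> 'a) list" where
  "beta G N P m = fp_reduce G (filter (\<lambda>l. N \<le> fst l) (Rc G P m))"

definition KK :: "(nat \<Rightarrow> 'a monoid) \<Rightarrow> 'a iword set set" where
  "KK G = {P \<in> carrier (topologists_product G). \<exists>N0. \<forall>N\<ge>N0. \<forall>m. beta G N P m = []}"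

context
  fixes G :: "nat \<Rightarrow> 'a monoid"
  assumes grp: "\<And>n. group (G n)"
begin

abbreviation "TPG \<equiv> topologists_product G"

interpretation T: group "topologists_product G" by (rule tp_group[OF grp])

lemma valid_filter: "valid G xs \<Longrightarrow> valid G (filter P xs)"
  by (auto simp: valid_def)

lemma red_beta: "P \<in> carrier TPG \<Longrightarrow> red G (beta G N P m)"
  unfolding beta_def by (rule red_reduce[OF grp valid_filter[OF valid_Rc[OF grp]]])

lemma beta_mult: "P \<in> carrier TPG \<Longrightarrow> Q \<in> carrier TPG \<Longrightarrow>
  beta G N (P \<otimes>\<^bsub>TPG\<^esub> Q) m = fp_reduce G (beta G N P m @ beta G N Q m)"
proof -
  assume P: "P \<in> carrier TPG" and Q: "Q \<in> carrier TPG"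
  let ?a = "Rc G P m" and ?b = "Rc G Q m" and ?f = "filter (\<lambda>l. N \<le> fst l)"
  have v: "valid G ?a" "valid G ?b" using valid_Rc[OF grp] P Q by auto
  have "beta G N (P \<otimes>\<^bsub>TPG\<^esub> Q) m = fp_reduce G (?f (fp_reduce G (?a @ ?b)))"
    by (simp add: beta_def Rc_mult[OF grp P Q])
  also have "\<dots> = fp_reduce G (?f (?a @ ?b))"
    using reduce_filter[OF grp, where xs="?a @ ?b" and P="\<lambda>n. N \<le> n"] v by simp
  also have "\<dots> = fp_reduce G (?f ?a @ ?f ?b)" by simp
  also have "\<dots> = fp_reduce G (beta G N P m @ beta G N Q m)"
    unfolding beta_def using reduce_append[OF grp valid_filter valid_filter] v by blast
  finally show ?thesis .
qed

lemma beta_one: "beta G N \<one>\<^bsub>TPG\<^esub> m = []"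
  by (simp add: beta_def Rc_one[OF grp])

lemma beta_inv: assumes P: "P \<in> carrier TPG" and b: "\<And>m. beta G N P m = []"
  shows "beta G N (inv\<^bsub>TPG\<^esub> P) m = []"
proof -
  have "beta G N (P \<otimes>\<^bsub>TPG\<^esub> inv\<^bsub>TPG\<^esub> P) m = []" using P by (simp add: beta_one)
  then have "fp_reduce G (beta G N (inv\<^bsub>TPG\<^esub> P) m) = []"
    using beta_mult[OF P T.inv_closed[OF P]] b by simp
  then show ?thesis using reduce_red[OF grp red_beta[OF T.inv_closed[OF P]]] by simp
qed

lemma KK_subgroup: "subgroup (KK G) TPG"
proof (rule T.subgroupI)
  show "KK G \<subseteq> carrier TPG" by (auto simp: KK_def)
  show "KK G \<noteq> {}" using beta_one by (auto simp: KK_def)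
  show "inv\<^bsub>TPG\<^esub> P \<in> KK G" if "P \<in> KK G" for P
    using that beta_inv by (auto simp: KK_def) blast
  show "P \<otimes>\<^bsub>TPG\<^esub> Q \<in> KK G" if PK: "P \<in> KK G" and QK: "Q \<in> KK G" for P Q
  proof -
    obtain N1 where N1: "\<forall>N\<ge>N1. \<forall>m. beta G N P m = []" using PK unfolding KK_def by blast
    obtain N2 where N2: "\<forall>N\<ge>N2. \<forall>m. beta G N Q m = []" using QK unfolding KK_def by blast
    note N = N1 N2
    have PQ: "P \<in> carrier TPG" "Q \<in> carrier TPG" using PK QK by (auto simp: KK_def)
    have "\<forall>N\<ge>max N1 N2. \<forall>m. beta G N (P \<otimes>\<^bsub>TPG\<^esub> Q) m = []"
      using N by (simp add: beta_mult[OF PQ])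
    then have "\<exists>N0. \<forall>N\<ge>N0. \<forall>m. beta G N (P \<otimes>\<^bsub>TPG\<^esub> Q) m = []" by blast
    then show ?thesis using PQ by (simp add: KK_def)
  qed
qed

lemma finite_in_KK: assumes "u \<in> inf_words G" "finite (fst u)" shows "tp_class G u \<in> KK G"
proof -
  define N0 where "N0 = Suc (Max (insert 0 ((\<lambda>i. fst (snd u i)) ` fst u)))"
  have lt: "fst (snd u i) < N0" if "i \<in> fst u" for i
    using assms(2) that by (auto simp: N0_def less_Suc_eq_le)
  have "beta G N (tp_class G u) m = []" if "N \<ge> N0" for N m
  proof -
    have "filter (\<lambda>l. N \<le> fst l) (restr u m) = []"
      using that finite_rset[OF assms(1)] by (auto simp: restr_rset rset_def filter_empty_conv dest!: lt)
    then have "fp_reduce G (filter (\<lambda>l. N \<le> fst l) (fp_reduce G (restr u m))) = []"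
      using reduce_filter[OF grp valid_restr[OF assms(1), where m=m], where P="\<lambda>n. N \<le> n"] by simp
    then show ?thesis by (simp add: beta_def Rc_class[OF assms(1)] RR_def)
  qed
  then show ?thesis using assms by (auto simp: KK_def tp_carrier)
qed

lemma normal_closure_KK: "normal_closure TPG (free_product_sub G) \<subseteq> KK G"
  unfolding normal_closure_def
proof (rule T.generate_subgroup_incl[OF _ KK_subgroup])
  show "{g \<otimes>\<^bsub>TPG\<^esub> s \<otimes>\<^bsub>TPG\<^esub> inv\<^bsub>TPG\<^esub> g |g s. g \<in> carrier TPG \<and> s \<in> free_product_sub G} \<subseteq> KK G"
  proof clarify
    fix g s assume g: "g \<in> carrier TPG" and s: "s \<in> free_product_sub G"
    have sK: "s \<in> KK G" using s finite_in_KK by (auto simp: free_product_sub_def)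
    then obtain N0 where N0: "\<forall>N\<ge>N0. \<forall>m. beta G N s m = []" and sc: "s \<in> carrier TPG" by (auto simp: KK_def)
    have ig: "inv\<^bsub>TPG\<^esub> g \<in> carrier TPG" using g by simp
    have "beta G N (g \<otimes>\<^bsub>TPG\<^esub> s \<otimes>\<^bsub>TPG\<^esub> inv\<^bsub>TPG\<^esub> g) m = []" if "N \<ge> N0" for N m
    proof -
      have "beta G N (g \<otimes>\<^bsub>TPG\<^esub> s \<otimes>\<^bsub>TPG\<^esub> inv\<^bsub>TPG\<^esub> g) m =
          fp_reduce G (fp_reduce G (beta G N g m @ beta G N s m) @ beta G N (inv\<^bsub>TPG\<^esub> g) m)"
        using g sc ig by (simp add: beta_mult)
      also have "\<dots> = fp_reduce G (beta G N g m @ beta G N (inv\<^bsub>TPG\<^esub> g) m)"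
        using N0 that reduce_red[OF grp red_beta[OF g]] by simp
      also have "\<dots> = beta G N (g \<otimes>\<^bsub>TPG\<^esub> inv\<^bsub>TPG\<^esub> g) m" using beta_mult[OF g ig] by simp
      also have "\<dots> = []" using g by (simp add: beta_one)
      finally show ?thesis .
    qed
    then show "g \<otimes>\<^bsub>TPG\<^esub> s \<otimes>\<^bsub>TPG\<^esub> inv\<^bsub>TPG\<^esub> g \<in> KK G" using g sc ig by (auto simp: KK_def)
  qed
qed

lemma coset_eq_beta:
  assumes Xc: "Xc \<in> carrier TPG" and Yc: "Yc \<in> carrier TPG"
    and eq: "r_coset TPG (normal_closure TPG (free_product_sub G)) Xc = r_coset TPG (normal_closure TPG (free_product_sub G)) Yc"
  shows "\<exists>N0. \<forall>N\<ge>N0. \<forall>m. beta G N Xc m = beta G N Yc m"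
proof -
  let ?N = "normal_closure TPG (free_product_sub G)"
  have "\<one>\<^bsub>TPG\<^esub> \<in> ?N" unfolding normal_closure_def by (rule generate.one)
  then have "Yc \<in> r_coset TPG ?N Yc" using Yc by (force simp: r_coset_def)
  then have "Yc \<in> r_coset TPG ?N Xc" using eq by simp
  then obtain h where h: "h \<in> ?N" "Yc = h \<otimes>\<^bsub>TPG\<^esub> Xc" by (auto simp: r_coset_def)
  then have "h \<in> KK G" using normal_closure_KK by blast
  then obtain N0 where N0: "\<forall>N\<ge>N0. \<forall>m. beta G N h m = []" and hc: "h \<in> carrier TPG" by (auto simp: KK_def)
  have "beta G N Xc m = beta G N Yc m" if "N \<ge> N0" for N m
    using h(2) N0 that beta_mult[OF hc Xc] reduce_red[OF grp red_beta[OF Xc]] by simp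
  then show ?thesis by blast
qed

end


lemma filter_sls: "finite A \<Longrightarrow> filter P (sorted_list_of_set A) = sorted_list_of_set {x\<in>A. P x}"
  by (rule sls_eq[symmetric]) (auto intro: sorted_wrt_filter)

definition xw :: "(nat \<Rightarrow> 'a monoid) \<Rightarrow> (nat \<Rightarrow> 'a \<Rightarrow> 'a) \<Rightarrow> (nat \<Rightarrow> 'a) \<Rightarrow> 'a iword" where
  "xw G c f = ({of_nat n | n. c n (f (fst (prod_decode n))) \<noteq> \<one>\<^bsub>G n\<^esub>},
     \<lambda>q. (nat \<lfloor>q\<rfloor>, c (nat \<lfloor>q\<rfloor>) (f (fst (prod_decode (nat \<lfloor>q\<rfloor>))))))"

lemma nat_floor_of_nat[simp]: "nat \<lfloor>(of_nat n :: rat)\<rfloor> = n"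
  by simp

context
  fixes G :: "nat \<Rightarrow> 'a monoid" and c :: "nat \<Rightarrow> 'a \<Rightarrow> 'a"
  assumes grp: "\<And>n. group (G n)"
    and cb: "\<And>n. bij_betw (c n) (carrier (G 0)) (carrier (G n))"
begin

lemma xw_words: assumes "f \<in> UNIV \<rightarrow> carrier (G 0)" shows "xw G c f \<in> inf_words G"
proof -
  have "c n (f k) \<in> carrier (G n)" for n k using assms cb[of n] by (auto simp: bij_betw_def)
  moreover have "{i \<in> fst (xw G c f). fst (snd (xw G c f) i) = n} \<subseteq> {of_nat n}" for n
    by (auto simp: xw_def)
  ultimately show ?thesis by (auto simp: inf_words_def xw_def letters_def intro: finite_subset)
qed

lemma beta_xw: assumes "f \<in> UNIV \<rightarrow> carrier (G 0)"
  shows "beta G n (tp_class G (xw G c f)) n =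
    (if c n (f (fst (prod_decode n))) \<noteq> \<one>\<^bsub>G n\<^esub> then [(n, c n (f (fst (prod_decode n))))] else [])"
proof -
  let ?a = "c n (f (fst (prod_decode n)))"
  have u: "xw G c f \<in> inf_words G" by (rule xw_words[OF assms])
  have a: "?a \<in> carrier (G n)" using assms cb[of n] by (auto simp: bij_betw_def)
  have fin: "finite (rset (xw G c f) n)" using finite_rset[OF u] .
  have set: "{x \<in> rset (xw G c f) n. n \<le> fst (snd (xw G c f) x)} = (if ?a \<noteq> \<one>\<^bsub>G n\<^esub> then {of_nat n} else {})"
    by (auto simp: rset_def xw_def)
  have "filter (\<lambda>l. n \<le> fst l) (restr (xw G c f) n) =
      map (snd (xw G c f)) (sorted_list_of_set {x \<in> rset (xw G c f) n. n \<le> fst (snd (xw G c f) x)})"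
    by (simp add: restr_rset filter_map comp_def filter_sls[OF fin])
  also have "\<dots> = (if ?a \<noteq> \<one>\<^bsub>G n\<^esub> then [(n, ?a)] else [])"
    unfolding set by (simp add: xw_def)
  finally have fl: "filter (\<lambda>l. n \<le> fst l) (restr (xw G c f) n) = (if ?a \<noteq> \<one>\<^bsub>G n\<^esub> then [(n, ?a)] else [])" .
  have "beta G n (tp_class G (xw G c f)) n = fp_reduce G (filter (\<lambda>l. n \<le> fst l) (fp_reduce G (restr (xw G c f) n)))"
    by (simp add: beta_def Rc_class[OF u] RR_def)
  also have "\<dots> = fp_reduce G (filter (\<lambda>l. n \<le> fst l) (restr (xw G c f) n))"
    using reduce_filter[OF grp valid_restr[OF u, where m=n], where P="\<lambda>k. n \<le> k"] by simp
  also have "\<dots> = (if ?a \<noteq> \<one>\<^bsub>G n\<^esub> then [(n, ?a)] else [])" unfolding fl using a by simp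
  finally show ?thesis .
qed

abbreviation "Ncl \<equiv> normal_closure (topologists_product G) (free_product_sub G)"

definition Phi :: "(nat \<Rightarrow> 'a) \<Rightarrow> 'a iword set set" where
  "Phi f = r_coset (topologists_product G) Ncl (tp_class G (xw G c f))"

lemma Phi_carrier: "f \<in> UNIV \<rightarrow> carrier (G 0) \<Longrightarrow> Phi f \<in> carrier (archipelago G)"
  using xw_words[of f]
  by (auto simp: Phi_def archipelago_def FactGroup_def RCOSETS_def tp_carrier)

lemma Phi_inj: "inj_on Phi (UNIV \<rightarrow>\<^sub>E carrier (G 0))"
proof (rule inj_onI)
  fix f g assume f: "f \<in> UNIV \<rightarrow>\<^sub>E carrier (G 0)" and g: "g \<in> UNIV \<rightarrow>\<^sub>E carrier (G 0)" and eq: "Phi f = Phi g"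
  have f': "f \<in> UNIV \<rightarrow> carrier (G 0)" and g': "g \<in> UNIV \<rightarrow> carrier (G 0)" using f g by auto
  have cf: "tp_class G (xw G c f) \<in> carrier (topologists_product G)" using xw_words[OF f'] by (simp add: tp_carrier)
  have cg: "tp_class G (xw G c g) \<in> carrier (topologists_product G)" using xw_words[OF g'] by (simp add: tp_carrier)
  obtain N0 where N0: "\<forall>N\<ge>N0. \<forall>m. beta G N (tp_class G (xw G c f)) m = beta G N (tp_class G (xw G c g)) m"
    using coset_eq_beta[OF grp cf cg] eq by (auto simp: Phi_def)
  have "f i = g i" for i
  proof -
    define n where "n = prod_encode (i, N0)"
    have n: "n \<ge> N0" "fst (prod_decode n) = i" by (auto simp: n_def le_prod_encode_2)
    have "beta G n (tp_class G (xw G c f)) n = beta G n (tp_class G (xw G c g)) n" using N0 n by blast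
    then have "c n (f i) = c n (g i)"
      unfolding beta_xw[OF f'] beta_xw[OF g'] n(2) by (auto split: if_splits)
    moreover have "f i \<in> carrier (G 0)" "g i \<in> carrier (G 0)" using f' g' by auto
    ultimately show ?thesis using cb[of n] by (auto simp: bij_betw_def inj_on_def)
  qed
  then show "f = g" by blast
qed

lemma lower_bound: "((UNIV::nat set) \<rightarrow>\<^sub>E carrier (G 0)) \<lesssim> carrier (archipelago G)"
proof -
  have "Phi ` (UNIV \<rightarrow>\<^sub>E carrier (G 0)) \<subseteq> carrier (archipelago G)"
    using Phi_carrier by (auto simp: PiE_def)
  then have "inj_on Phi (UNIV \<rightarrow>\<^sub>E carrier (G 0)) \<and> Phi ` (UNIV \<rightarrow>\<^sub>E carrier (G 0)) \<subseteq> carrier (archipelago G)"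
    using Phi_inj by simp
  then show ?thesis unfolding lepoll_def by (rule exI[where x = "Phi"])
qed

end


definition sq :: "(nat \<Rightarrow> 'a \<Rightarrow> 'a) \<Rightarrow> 'a iword \<Rightarrow> nat \<Rightarrow> (nat \<times> 'a) option" where
  "sq d u i = (if from_nat i \<in> fst u then Some (fst (snd u (from_nat i)), d (fst (snd u (from_nat i))) (snd (snd u (from_nat i)))) else None)"

definition enc :: "'a \<Rightarrow> 'a \<Rightarrow> (nat \<Rightarrow> (nat \<times> 'a) option) \<Rightarrow> nat \<Rightarrow> 'a" where
  "enc a0 b0 s k = (case prod_decode k of (i, 0) \<Rightarrow> (case s i of Some (n, x) \<Rightarrow> x | None \<Rightarrow> a0)
      | (i, Suc 0) \<Rightarrow> (if s i \<noteq> None then b0 else a0)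
      | (i, Suc (Suc t)) \<Rightarrow> (if \<exists>x. s i = Some (t, x) then b0 else a0))"

lemma enc_inj: assumes "a0 \<noteq> b0" "enc a0 b0 s = enc a0 b0 s'" shows "s = s'"
proof
  fix i
  have e: "enc a0 b0 s (prod_encode (i, j)) = enc a0 b0 s' (prod_encode (i, j))" for j using assms by simp
  have none: "s i = None \<longleftrightarrow> s' i = None" using e[of 1] assms(1) by (cases "s i"; cases "s' i") (auto simp: enc_def)
  show "s i = s' i"
  proof (cases "s i")
    case None then show ?thesis using none by simp
  next
    case (Some p)
    obtain n x where p: "p = (n, x)" by fastforce
    obtain n' x' where s': "s' i = Some (n', x')" using none Some by fastforce
    have "\<exists>x. s' i = Some (n, x)" using e[of "Suc (Suc n)"] Some p assms(1) by (auto simp: enc_def split: if_splits)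
    then have "n' = n" using s' by simp
    moreover have "x = x'" using e[of 0] Some p s' by (simp add: enc_def)
    ultimately show ?thesis using Some p s' by simp
  qed
qed

lemma enc_in: assumes "a0 \<in> A" "b0 \<in> A" "\<And>i n x. s i = Some (n, x) \<Longrightarrow> x \<in> A"
  shows "enc a0 b0 s \<in> (UNIV::nat set) \<rightarrow>\<^sub>E A"
proof -
  have "enc a0 b0 s k \<in> A" for k
    using assms by (auto simp: enc_def split: prod.splits nat.splits option.splits)
  then show ?thesis by auto
qed

context
  fixes G :: "nat \<Rightarrow> 'a monoid" and d :: "nat \<Rightarrow> 'a \<Rightarrow> 'a"
  assumes grp: "\<And>n. group (G n)"
    and db: "\<And>n. bij_betw (d n) (carrier (G n)) (carrier (G 0))"
begin

lemma sq_inj: assumes P: "P \<in> carrier (topologists_product G)" and Q: "Q \<in> carrier (topologists_product G)"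
  and eq: "sq d (rep P) = sq d (rep Q)" shows "P = Q"
proof -
  let ?u = "rep P" and ?v = "rep Q"
  have u: "?u \<in> inf_words G" and v: "?v \<in> inf_words G" using rep_carrier(1) P Q by auto
  have e: "sq d ?u (to_nat q) = sq d ?v (to_nat q)" for q using eq by simp
  have L: "q \<in> fst ?u \<longleftrightarrow> q \<in> fst ?v" for q using e[of q] by (auto simp: sq_def split: if_splits)
  have W: "snd ?u q = snd ?v q" if "q \<in> fst ?u" for q
  proof -
    have qv: "q \<in> fst ?v" using L that by simp
    have "snd ?u q \<in> letters G" "snd ?v q \<in> letters G" using u v that qv by (auto simp: inf_words_def)
    moreover have "fst (snd ?u q) = fst (snd ?v q)"
      "d (fst (snd ?u q)) (snd (snd ?u q)) = d (fst (snd ?v q)) (snd (snd ?v q))"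
      using e[of q] that qv by (auto simp: sq_def)
    ultimately show ?thesis using db[of "fst (snd ?u q)"]
      by (auto simp: letters_def bij_betw_def inj_on_def prod_eq_iff)
  qed
  have rs: "rset ?u m = rset ?v m" for m using L W by (auto simp: rset_def)
  have "restr ?u m = restr ?v m" for m
  proof -
    have "x \<in> fst ?u" if "x \<in> set (sorted_list_of_set (rset ?u m))" for x
      using that finite_rset[OF u, of m] by (auto simp: rset_def)
    then show ?thesis unfolding restr_rset rs[symmetric] using W by (auto intro: map_cong)
  qed
  then have "Rc G P = Rc G Q" by (simp add: Rc_def RR_def fun_eq_iff)
  then show ?thesis using tp_eq_iff P Q by blast
qed

lemma upper_TP: "carrier (topologists_product G) \<lesssim> (UNIV::nat set) \<rightarrow>\<^sub>E carrier (G 0)"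
proof (cases "\<exists>b0 \<in> carrier (G 0). b0 \<noteq> \<one>\<^bsub>G 0\<^esub>")
  case True
  then obtain b0 where b0: "b0 \<in> carrier (G 0)" "b0 \<noteq> \<one>\<^bsub>G 0\<^esub>" by blast
  have a0: "\<one>\<^bsub>G 0\<^esub> \<in> carrier (G 0)" by (rule monoid.one_closed[OF group.is_monoid[OF grp]])
  define F where "F P = enc \<one>\<^bsub>G 0\<^esub> b0 (sq d (rep P))" for P
  have "inj_on F (carrier (topologists_product G))"
  proof (rule inj_onI)
    fix P Q assume "P \<in> carrier (topologists_product G)" "Q \<in> carrier (topologists_product G)" "F P = F Q"
    then show "P = Q" using sq_inj enc_inj[OF b0(2)[symmetric]] by (simp add: F_def)
  qed
  moreover have "F ` carrier (topologists_product G) \<subseteq> (UNIV::nat set) \<rightarrow>\<^sub>E carrier (G 0)"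
  proof clarify
    fix P assume P: "P \<in> carrier (topologists_product G)"
    have u: "rep P \<in> inf_words G" using rep_carrier(1)[OF P] .
    have "x \<in> carrier (G 0)" if "sq d (rep P) i = Some (n, x)" for i n x
    proof -
      have fi: "from_nat i \<in> fst (rep P)" and nx: "n = fst (snd (rep P) (from_nat i))"
        "x = d n (snd (snd (rep P) (from_nat i)))" using that by (auto simp: sq_def split: if_splits)
      have "snd (rep P) (from_nat i) \<in> letters G" using u fi by (auto simp: inf_words_def)
      then have "snd (snd (rep P) (from_nat i)) \<in> carrier (G n)" using nx by (auto simp: letters_def)
      then show ?thesis using nx db[of n] by (auto simp: bij_betw_def)
    qed
    then show "F P \<in> UNIV \<rightarrow>\<^sub>E carrier (G 0)" unfolding F_def by (intro enc_in a0 b0)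
  qed
  ultimately show ?thesis unfolding lepoll_def by (rule exI[where x=F, OF conjI])
next
  case False
  have sub: "carrier (topologists_product G) \<subseteq> {\<one>\<^bsub>topologists_product G\<^esub>}"
  proof
    fix P assume P: "P \<in> carrier (topologists_product G)"
    have u: "rep P \<in> inf_words G" using rep_carrier(1)[OF P] .
    have triv: "carrier (G n) \<subseteq> {\<one>\<^bsub>G n\<^esub>}" for n
    proof
      fix g assume g: "g \<in> carrier (G n)"
      have "d n g = \<one>\<^bsub>G 0\<^esub>" "d n \<one>\<^bsub>G n\<^esub> = \<one>\<^bsub>G 0\<^esub>"
        using False g db[of n] group.is_monoid[OF grp, of n] monoid.one_closed[of "G n"]
        by (auto simp: bij_betw_def)
      then show "g \<in> {\<one>\<^bsub>G n\<^esub>}" using db[of n] g group.is_monoid[OF grp, of n] monoid.one_closed[of "G n"]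
        by (auto simp: bij_betw_def inj_on_def)
    qed
    have "fst (rep P) = {}" using u triv by (fastforce simp: inf_words_def letters_def)
    then have "Rc G P m = []" for m by (simp add: Rc_def RR_def restr_def)
    then have "Rc G P = Rc G \<one>\<^bsub>topologists_product G\<^esub>"
      by (simp add: Rc_one[OF grp] fun_eq_iff)
    then show "P \<in> {\<one>\<^bsub>topologists_product G\<^esub>}"
      using tp_eq_iff[OF P monoid.one_closed[OF group.is_monoid[OF tp_group[OF grp]]]] by simp
  qed
  have ne: "(\<lambda>_. \<one>\<^bsub>G 0\<^esub>) \<in> (UNIV::nat set) \<rightarrow>\<^sub>E carrier (G 0)"
    using monoid.one_closed[OF group.is_monoid[OF grp]] by auto
  have "carrier (topologists_product G) \<lesssim> {\<one>\<^bsub>topologists_product G\<^esub>}" using sub by (rule subset_imp_lepoll)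
  also have "\<dots> \<lesssim> insert (\<lambda>_. \<one>\<^bsub>G 0\<^esub>) ((UNIV::nat set) \<rightarrow>\<^sub>E carrier (G 0))" by (rule singleton_lepoll)
  also have "\<dots> = (UNIV::nat set) \<rightarrow>\<^sub>E carrier (G 0)" by (rule insert_absorb[OF ne])
  finally show ?thesis .
qed

lemma upper_bound: "carrier (archipelago G) \<lesssim> (UNIV::nat set) \<rightarrow>\<^sub>E carrier (G 0)"
proof -
  have "carrier (archipelago G) \<subseteq> (\<lambda>x. r_coset (topologists_product G) (normal_closure (topologists_product G) (free_product_sub G)) x) ` carrier (topologists_product G)"
    by (auto simp: archipelago_def FactGroup_def RCOSETS_def)
  then have "carrier (archipelago G) \<lesssim> carrier (topologists_product G)" by (rule subset_image_lepoll)
  then show ?thesis by (rule lepoll_trans[OF _ upper_TP])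
qed

end


fun fred :: "('x \<times> bool) list \<Rightarrow> bool" where
  "fred [] = True"
| "fred [a] = True"
| "fred ((x,b)#(y,c)#ys) = (\<not>(x = y \<and> b \<noteq> c) \<and> fred ((y,c)#ys))"

lemma fred_tl: "fred (a#xs) \<Longrightarrow> fred xs"
  by (cases a; cases xs) auto

lemma fg_reduce_Nil[simp]: "fg_reduce [] = []" by (simp add: fg_reduce_def)
lemma fg_reduce_Cons[simp]: "fg_reduce (a#xs) = fg_insert a (fg_reduce xs)" by (simp add: fg_reduce_def)
lemma fg_reduce_append: "fg_reduce (xs @ ys) = foldr fg_insert xs (fg_reduce ys)" by (simp add: fg_reduce_def)

lemma fg_insert_fred: "fred ys \<Longrightarrow> fred (fg_insert a ys)"
proof (cases a)
  case (Pair x b)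
  assume r: "fred ys"
  show ?thesis
  proof (cases ys)
    case (Cons y ys')
    obtain z c where y: "y = (z,c)" by fastforce
    have r': "fred ys'" using r Cons fred_tl by blast
    show ?thesis using r r' Cons y Pair by auto
  qed (simp add: Pair)
qed

lemma fg_cancel: "fred ys \<Longrightarrow> fg_insert (x, \<not>b) (fg_insert (x,b) ys) = ys"
proof (cases ys)
  case (Cons y ys')
  assume r: "fred ys"
  obtain z c where y: "y = (z,c)" by fastforce
  show ?thesis
  proof (cases "x = z \<and> b \<noteq> c")
    case True
    have "fg_insert (x, \<not>b) ys' = (x, \<not> b) # ys'"
    proof (cases ys')
      case (Cons w ws)
      obtain z' c' where w: "w = (z',c')" by fastforce
      then show ?thesis using r Cons y \<open>ys = y # ys'\<close> True by auto
    qed simp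
    then show ?thesis using Cons y True by auto
  qed (use Cons y in auto)
qed simp

lemma fred_reduce: "fred (fg_reduce xs)"
  by (induction xs) (auto intro: fg_insert_fred)

lemma reduce_fred: "fred ys \<Longrightarrow> fg_reduce ys = ys"
proof (induction ys)
  case (Cons y ys)
  have r: "fred ys" using Cons.prems fred_tl by blast
  obtain x b where y: "y = (x,b)" by fastforce
  show ?case
  proof (cases ys)
    case (Cons z zs)
    obtain x' b' where z: "z = (x',b')" by fastforce
    show ?thesis using Cons.IH[OF r] Cons.prems y z \<open>ys = z # zs\<close> by auto
  qed (simp add: y)
qed simp

lemma fg_foldr_ins: "fred ys \<Longrightarrow> fred zs \<Longrightarrow>
  foldr fg_insert (fg_insert a ys) zs = fg_insert a (foldr fg_insert ys zs)"
proof (cases ys)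
  case (Cons y ys')
  assume r: "fred ys" and zs: "fred zs"
  obtain x b where a: "a = (x,b)" by fastforce
  obtain z c where y: "y = (z,c)" by fastforce
  have fr: "fred (foldr fg_insert ys' zs)"
    by (induction ys') (use zs in \<open>auto intro: fg_insert_fred\<close>)
  show ?thesis
  proof (cases "x = z \<and> b \<noteq> c")
    case True
    then have "b = (\<not> c)" by auto
    then show ?thesis using Cons a y True fg_cancel[OF fr, of z c] by auto
  qed (use Cons a y in auto)
qed (cases a, simp)

lemma fg_foldr_red: "fred zs \<Longrightarrow> fred (foldr fg_insert xs zs)"
  by (induction xs) (auto intro: fg_insert_fred)

lemma fg_foldr_reduce: "fred zs \<Longrightarrow> foldr fg_insert (fg_reduce xs) zs = foldr fg_insert xs zs"
  by (induction xs) (simp_all add: fg_foldr_ins fred_reduce)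

lemma fg_reduce_append2: "fg_reduce (fg_reduce xs @ ys) = fg_reduce (xs @ ys)"
  by (simp add: fg_reduce_append fg_foldr_reduce fred_reduce)

lemma fg_reduce_append3: "fg_reduce (xs @ fg_reduce ys) = fg_reduce (xs @ ys)"
  by (simp add: fg_reduce_append reduce_fred fred_reduce)

definition finv :: "('x \<times> bool) list \<Rightarrow> ('x \<times> bool) list" where
  "finv xs = rev (map (\<lambda>(x,b). (x, \<not>b)) xs)"

lemma fg_cancel_list: "fg_reduce (finv xs @ xs @ ys) = fg_reduce ys"
proof (induction xs arbitrary: ys)
  case (Cons a xs)
  obtain x b where a: "a = (x,b)" by fastforce
  have "fg_reduce (finv (a#xs) @ (a#xs) @ ys) = fg_reduce (finv xs @ ((x, \<not>b) # (x,b) # xs @ ys))"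
    by (simp add: finv_def a)
  also have "\<dots> = foldr fg_insert (finv xs) (fg_insert (x, \<not>b) (fg_insert (x,b) (fg_reduce (xs @ ys))))"
    by (simp add: fg_reduce_append)
  also have "\<dots> = foldr fg_insert (finv xs) (fg_reduce (xs @ ys))"
    by (subst fg_cancel[OF fred_reduce]) (rule refl)
  also have "\<dots> = fg_reduce (finv xs @ xs @ ys)" by (simp add: fg_reduce_append)
  finally show ?case using Cons.IH by simp
qed (simp add: finv_def)

lemma set_fg_insert: "set (fg_insert a ys) \<subseteq> insert a (set ys)"
  by (cases a; cases ys) (auto split: if_splits)

lemma set_fg_reduce: "set (fg_reduce xs) \<subseteq> set xs"
  by (induction xs) (use set_fg_insert in fastforce)+

lemma free_group_is_group: "group (free_group S)"
proof (rule groupI)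
  let ?F = "free_group S"
  have car: "u \<in> carrier ?F \<longleftrightarrow> (\<forall>p\<in>set u. fst p \<in> S) \<and> fg_reduce u = u" for u
    by (simp add: free_group_def)
  have mult: "u \<otimes>\<^bsub>?F\<^esub> v = fg_reduce (u @ v)" for u v by (simp add: free_group_def)
  have one: "\<one>\<^bsub>?F\<^esub> = []" by (simp add: free_group_def)
  have red_car: "fg_reduce w \<in> carrier ?F" if "\<forall>p\<in>set w. fst p \<in> S" for w
    using that set_fg_reduce[of w] by (auto simp: car reduce_fred fred_reduce)
  show "u \<otimes>\<^bsub>?F\<^esub> v \<in> carrier ?F" if "u \<in> carrier ?F" "v \<in> carrier ?F" for u v
  proof -
    have "\<forall>p\<in>set (u @ v). fst p \<in> S" using that by (auto simp: car)
    then show ?thesis unfolding mult by (rule red_car)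
  qed
  show "\<one>\<^bsub>?F\<^esub> \<in> carrier ?F" by (simp add: one car)
  show "u \<otimes>\<^bsub>?F\<^esub> v \<otimes>\<^bsub>?F\<^esub> w = u \<otimes>\<^bsub>?F\<^esub> (v \<otimes>\<^bsub>?F\<^esub> w)" for u v w
    by (simp add: mult fg_reduce_append2 fg_reduce_append3)
  show "\<one>\<^bsub>?F\<^esub> \<otimes>\<^bsub>?F\<^esub> u = u" if "u \<in> carrier ?F" for u
    using that by (simp add: mult one car)
  show "\<exists>v\<in>carrier ?F. v \<otimes>\<^bsub>?F\<^esub> u = \<one>\<^bsub>?F\<^esub>" if "u \<in> carrier ?F" for u
  proof (intro bexI)
    show "fg_reduce (finv u) \<in> carrier ?F" using that by (intro red_car) (auto simp: finv_def car)
    show "fg_reduce (finv u) \<otimes>\<^bsub>?F\<^esub> u = \<one>\<^bsub>?F\<^esub>"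
      using fg_cancel_list[of u "[]"] by (simp add: mult one fg_reduce_append2)
  qed
qed


lemma part1:
  fixes G :: "nat \<Rightarrow> 'a monoid"
  assumes grp: "\<And>n. group (G n)" and eq: "\<And>n. carrier (G n) \<approx> carrier (G 0)"
  shows "carrier (archipelago G) \<approx> (UNIV :: nat set) \<rightarrow>\<^sub>E carrier (G 0)"
proof -
  define d where "d n = (SOME f. bij_betw f (carrier (G n)) (carrier (G 0)))" for n
  have db: "bij_betw (d n) (carrier (G n)) (carrier (G 0))" for n
    using eq[of n] unfolding d_def eqpoll_def by (rule someI_ex)
  define c where "c n = the_inv_into (carrier (G n)) (d n)" for n
  have cb: "bij_betw (c n) (carrier (G 0)) (carrier (G n))" for n
    unfolding c_def by (rule bij_betw_the_inv_into[OF db])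
  show ?thesis
    by (rule lepoll_antisym[OF upper_bound[where G=G and d=d, OF grp db] lower_bound[where G=G and c=c, OF grp cb]])
qed

definition SD :: "'b set monoid" where
  "SD = \<lparr>carrier = UNIV, Group.monoid.mult = (\<lambda>A B. (A - B) \<union> (B - A)), one = {}\<rparr>"

lemma SD_group: "group SD"
proof (rule groupI)
  show "\<exists>y\<in>carrier SD. y \<otimes>\<^bsub>SD\<^esub> x = \<one>\<^bsub>SD\<^esub>" for x
    by (rule bexI[of _ x]) (auto simp: SD_def)
qed (auto simp: SD_def)

lemma part2:
  fixes K :: "'i \<Rightarrow> 'b monoid"
  shows "\<exists>G :: nat \<Rightarrow> 'b set monoid. (\<forall>n. group (G n)) \<and> (\<forall>i. \<not> archipelago G \<cong> K i)"
proof (intro exI[of _ "\<lambda>_. SD"] conjI allI notI)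
  show "group SD" for n :: nat by (rule SD_group)
  fix i assume iso: "archipelago (\<lambda>_::nat. SD :: 'b set monoid) \<cong> K i"
  let ?A = "archipelago (\<lambda>_::nat. SD :: 'b set monoid)"
  have lb: "(UNIV :: nat set) \<rightarrow>\<^sub>E carrier (SD :: 'b set monoid) \<lesssim> carrier ?A"
    using lower_bound[of "\<lambda>_. SD" "\<lambda>_. id"] SD_group by (simp add: bij_betw_def)
  obtain h where "bij_betw h (carrier ?A) (carrier (K i))" using iso by (auto simp: is_iso_def iso_def)
  then have "carrier ?A \<lesssim> (UNIV :: 'b set)"
    by (meson bij_betw_imp_surj_on eqpoll_def eqpoll_imp_lepoll lepoll_trans subset_UNIV subset_imp_lepoll)
  moreover have "Pow (UNIV :: 'b set) \<lesssim> (UNIV :: nat set) \<rightarrow>\<^sub>E carrier (SD :: 'b set monoid)"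
    unfolding lepoll_def by (rule exI[of _ "\<lambda>S _. S"]) (auto simp: inj_on_def SD_def fun_eq_iff)
  ultimately have "Pow (UNIV :: 'b set) \<lesssim> (UNIV :: 'b set)"
    using lb lepoll_trans by metis
  then show False
    using lesspoll_Pow_self[of "UNIV :: 'b set"]
    by (meson lepoll_antisym lesspoll_def)
qed


lemma times_nat_lepoll: assumes "(UNIV::nat set) \<lesssim> D" shows "(UNIV::nat set) \<times> D \<lesssim> D"
proof -
  have inf: "infinite D" using assms infinite_le_lepoll by blast
  have "D \<times> D \<approx> D" using card_of_Times_same_infinite[OF inf] eqpoll_iff_card_of_ordIso by blast
  moreover have "(UNIV::nat set) \<times> D \<lesssim> D \<times> D" using times_lepoll_mono[OF assms lepoll_refl] .
  ultimately show ?thesis using eqpoll_imp_lepoll lepoll_trans by blast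
qed

lemma Pow_lepoll_mono': assumes "lepoll (A::'x set) (B::'y set)" shows "lepoll (Pow A) (Pow B)"
proof -
  obtain f where f: "inj_on f A" "f ` A \<subseteq> B" using assms by (auto simp: lepoll_def)
  have "inj_on (image f) (Pow A)" using inj_on_image_Pow[OF f(1)] .
  moreover have "image f ` Pow A \<subseteq> Pow B" using f(2) by auto
  ultimately show ?thesis unfolding lepoll_def by (rule exI[where x="image f", OF conjI])
qed

definition code :: "'c \<Rightarrow> (nat \<Rightarrow> ('c set \<times> bool) list) \<Rightarrow> (nat \<times> nat \<times> nat \<times> 'c) set" where
  "code d0 F = {(i,j,0,d0) | i j. j < length (F i)} \<union> {(i,j,1,d0) | i j. j < length (F i) \<and> snd (F i ! j)}
     \<union> {(i,j,2,d) | i j d. j < length (F i) \<and> d \<in> fst (F i ! j)}"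

lemma code_inj: assumes "code d0 F = code d0 F'" shows "F = F'"
proof
  fix i
  have len: "j < length (F i) \<longleftrightarrow> j < length (F' i)" for j
  proof -
    have "(i,j,0,d0) \<in> code d0 F \<longleftrightarrow> j < length (F i)" "(i,j,0,d0) \<in> code d0 F' \<longleftrightarrow> j < length (F' i)"
      by (auto simp: code_def)
    then show ?thesis using assms by simp
  qed
  then have L: "length (F i) = length (F' i)" by (meson linorder_neqE_nat less_irrefl)
  show "F i = F' i"
  proof (rule nth_equalityI[OF L])
    fix j assume j: "j < length (F i)"
    have j': "j < length (F' i)" using j L by simp
    have "(i,j,1,d0) \<in> code d0 F \<longleftrightarrow> snd (F i ! j)" "(i,j,1,d0) \<in> code d0 F' \<longleftrightarrow> snd (F' i ! j)"
      using j j' by (auto simp: code_def)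
    then have s: "snd (F i ! j) = snd (F' i ! j)" using assms by simp
    have "(i,j,2,d) \<in> code d0 F \<longleftrightarrow> d \<in> fst (F i ! j)" "(i,j,2,d) \<in> code d0 F' \<longleftrightarrow> d \<in> fst (F' i ! j)" for d
      using j j' by (auto simp: code_def)
    then have "fst (F i ! j) = fst (F' i ! j)" using assms by blast
    then show "F i ! j = F' i ! j" using s by (simp add: prod_eq_iff)
  qed
qed

lemma fg_cube: assumes D: "(UNIV::nat set) \<lesssim> D"
  shows "(UNIV::nat set) \<rightarrow>\<^sub>E carrier (free_group (Pow D)) \<lesssim> Pow D"
proof -
  have "D \<noteq> {}" using D by auto
  then obtain d0 where d0: "d0 \<in> D" by blast
  let ?X = "(UNIV::nat set) \<rightarrow>\<^sub>E carrier (free_group (Pow D))"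
  have "inj_on (code d0) ?X" by (rule inj_onI) (rule code_inj)
  moreover have "code d0 ` ?X \<subseteq> Pow ((UNIV::nat set) \<times> (UNIV::nat set) \<times> (UNIV::nat set) \<times> D)"
  proof -
    have "(i,j,t,d) \<in> (UNIV::nat set) \<times> (UNIV::nat set) \<times> (UNIV::nat set) \<times> D"
      if F: "F \<in> ?X" and c: "(i,j,t,d) \<in> code d0 F" for F i j t d
    proof -
    have "d = d0 \<or> (j < length (F i) \<and> d \<in> fst (F i ! j))" using c by (auto simp: code_def)
    moreover have "j < length (F i) \<Longrightarrow> fst (F i ! j) \<in> Pow D"
      using F by (auto simp: free_group_def PiE_def Pi_def) (meson PowD nth_mem subset_iff)
    ultimately show ?thesis using d0 by auto
    qed
    then show ?thesis by fast
  qed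
  ultimately have "?X \<lesssim> Pow ((UNIV::nat set) \<times> (UNIV::nat set) \<times> (UNIV::nat set) \<times> D)"
    unfolding lepoll_def by (rule exI[where x="code d0", OF conjI])
  also have "\<dots> \<lesssim> Pow D"
  proof (rule Pow_lepoll_mono')
    have a: "(UNIV::nat set) \<times> D \<lesssim> D" by (rule times_nat_lepoll[OF D])
    have b: "(UNIV::nat set) \<times> ((UNIV::nat set) \<times> D) \<lesssim> D"
      using times_nat_lepoll[OF D] lepoll_trans times_lepoll_mono[OF lepoll_refl a] by blast
    show "(UNIV::nat set) \<times> (UNIV::nat set) \<times> (UNIV::nat set) \<times> D \<lesssim> D"
      using lepoll_trans times_lepoll_mono[OF lepoll_refl b] a by blast
  qed
  finally show ?thesis .
qed

lemma Pow_le_fg: "Pow D \<lesssim> (UNIV::nat set) \<rightarrow>\<^sub>E carrier (free_group (Pow D))"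
proof -
  have "inj_on (\<lambda>S (_::nat). [(S, True)]) (Pow D)" by (auto simp: inj_on_def fun_eq_iff)
  moreover have "(\<lambda>S (_::nat). [(S, True)]) ` Pow D \<subseteq> (UNIV::nat set) \<rightarrow>\<^sub>E carrier (free_group (Pow D))"
    by (auto simp: free_group_def fg_reduce_def)
  ultimately show ?thesis unfolding lepoll_def by (rule exI[where x="\<lambda>S (_::nat). [(S, True)]", OF conjI])
qed


context
  fixes r :: "'o rel" and B :: "'o \<Rightarrow> 'c set"
  assumes WO: "Well_order r" and BS: "beth_seq r B"
begin

interpretation W: wo_rel r using WO by (simp add: wo_rel_def)

lemma B_min: "wo_min r a \<Longrightarrow> B a \<approx> (UNIV::nat set)" using BS by (simp add: beth_seq_def)
lemma B_succ: "wo_succ r b a \<Longrightarrow> B a \<approx> Pow (B b)" using BS by (simp add: beth_seq_def)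
lemma B_lim: "wo_limit r a \<Longrightarrow> wo_less r b a \<Longrightarrow> B b \<lesssim> B a" using BS by (simp add: beth_seq_def)

lemma antis: "(a,b) \<in> r \<Longrightarrow> (b,a) \<in> r \<Longrightarrow> a = b"
  using W.ANTISYM by (auto simp: antisym_def)

lemma refl': "a \<in> Field r \<Longrightarrow> (a,a) \<in> r"
  using W.REFL by (auto simp: refl_on_def)

lemma beth_lt: "wo_less r a b \<Longrightarrow> Pow (B a) \<lesssim> B b"
proof (induction b arbitrary: a rule: W.well_order_induct)
  case (1 b)
  have ab: "(a,b) \<in> r" "a \<noteq> b" using "1.prems" by (auto simp: wo_less_def)
  have aF: "a \<in> Field r" and bF: "b \<in> Field r" using ab(1) by (auto simp: Field_def)
  show ?case
  proof (cases "wo_min r b")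
    case True
    then have "(b,a) \<in> r" using aF by (simp add: wo_min_def)
    then show ?thesis using antis ab by blast
  next
    case nmin: False
    show ?thesis
    proof (cases "\<exists>c. wo_succ r c b")
      case True
      then obtain c where c: "wo_succ r c b" by blast
      have Bb: "B b \<approx> Pow (B c)" using B_succ[OF c] .
      show ?thesis
      proof (cases "a = c")
        case True then show ?thesis using eqpoll_imp_lepoll[OF eqpoll_sym[OF Bb]] by simp
      next
        case False
        have cb: "(c,b) \<in> r" "c \<noteq> b" using c by (auto simp: wo_succ_def wo_less_def)
        have cF: "c \<in> Field r" using cb by (auto simp: Field_def)
        have "(a,c) \<in> r"
        proof (rule ccontr)
          assume "(a,c) \<notin> r"
          then have "(c,a) \<in> r" using W.TOTALS aF cF by blast
          then have "wo_less r c a" using False by (auto simp: wo_less_def)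
          then show False using c "1.prems" by (auto simp: wo_succ_def)
        qed
        then have "Pow (B a) \<lesssim> B c" using "1.IH" cb False by (auto simp: wo_less_def)
        also have "\<dots> \<lesssim> Pow (B c)" by (rule lepoll_Pow_self)
        also have "\<dots> \<lesssim> B b" by (rule eqpoll_imp_lepoll[OF eqpoll_sym[OF Bb]])
        finally show ?thesis .
      qed
    next
      case nsucc: False
      have lim: "wo_limit r b" using bF nmin nsucc by (simp add: wo_limit_def)
      define S where "S = {c \<in> Field r. wo_less r a c}"
      have SF: "S \<subseteq> Field r" by (auto simp: S_def)
      have bS: "b \<in> S" using bF "1.prems" by (simp add: S_def)
      define a' where "a' = W.minim S"
      have a'S: "a' \<in> S" unfolding a'_def using W.minim_in[OF SF] bS by blast
      have a'b: "(a', b) \<in> r" unfolding a'_def using W.minim_least[OF SF bS] .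
      have succ: "wo_succ r a a'"
      proof -
        have "wo_less r a a'" using a'S by (simp add: S_def)
        moreover have "\<not> (wo_less r a x \<and> wo_less r x a')" for x
        proof
          assume x: "wo_less r a x \<and> wo_less r x a'"
          then have "x \<in> S" by (auto simp: S_def wo_less_def Field_def)
          then have "(a', x) \<in> r" unfolding a'_def using W.minim_least[OF SF] by blast
          then show False using x antis by (auto simp: wo_less_def)
        qed
        ultimately show ?thesis by (auto simp: wo_succ_def)
      qed
      have "a' \<noteq> b" using nsucc succ by blast
      then have "wo_less r a' b" using a'b by (simp add: wo_less_def)
      then have "B a' \<lesssim> B b" using B_lim[OF lim] by blast
      moreover have "Pow (B a) \<lesssim> B a'" by (rule eqpoll_imp_lepoll[OF eqpoll_sym[OF B_succ[OF succ]]])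
      ultimately show ?thesis by (rule lepoll_trans[rotated])
    qed
  qed
qed

lemma beth_inf: "a \<in> Field r \<Longrightarrow> (UNIV::nat set) \<lesssim> B a"
proof (induction a rule: W.well_order_induct)
  case (1 b)
  show ?case
  proof (cases "wo_min r b")
    case True
    then show ?thesis by (rule eqpoll_imp_lepoll[OF eqpoll_sym[OF B_min]])
  next
    case nmin: False
    show ?thesis
    proof (cases "\<exists>c. wo_succ r c b")
      case True
      then obtain c where c: "wo_succ r c b" by blast
      have cb: "(c,b) \<in> r" "c \<noteq> b" using c by (auto simp: wo_succ_def wo_less_def)
      have cF: "c \<in> Field r" using cb by (auto simp: Field_def)
      have "(UNIV::nat set) \<lesssim> B c" using "1.IH" cb cF by blast
      also have "\<dots> \<lesssim> Pow (B c)" by (rule lepoll_Pow_self)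
      also have "\<dots> \<lesssim> B b" by (rule eqpoll_imp_lepoll[OF eqpoll_sym[OF B_succ[OF c]]])
      finally show ?thesis .
    next
      case nsucc: False
      have lim: "wo_limit r b" using "1.prems" nmin nsucc by (simp add: wo_limit_def)
      obtain c where cF: "c \<in> Field r" and nbc: "(b,c) \<notin> r" using nmin "1.prems" by (auto simp: wo_min_def)
      have "(c,b) \<in> r" using W.TOTALS cF "1.prems" nbc by blast
      moreover have "c \<noteq> b" using nbc refl' "1.prems" by blast
      ultimately have "(UNIV::nat set) \<lesssim> B c" "wo_less r c b" using "1.IH" cF by (auto simp: wo_less_def)
      then show ?thesis using lepoll_trans[OF _ B_lim[OF lim]] by blast
    qed
  qed
qed

lemma part3_aux: assumes "wo_less r a b"
  shows "\<not> ((UNIV::nat set) \<rightarrow>\<^sub>E carrier (free_group (Pow (B a))) \<approx> (UNIV::nat set) \<rightarrow>\<^sub>E carrier (free_group (Pow (B b))))"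
proof
  assume eq: "(UNIV::nat set) \<rightarrow>\<^sub>E carrier (free_group (Pow (B a))) \<approx> (UNIV::nat set) \<rightarrow>\<^sub>E carrier (free_group (Pow (B b)))"
  have aF: "a \<in> Field r" using assms by (auto simp: wo_less_def Field_def)
  have "Pow (B b) \<lesssim> (UNIV::nat set) \<rightarrow>\<^sub>E carrier (free_group (Pow (B b)))" by (rule Pow_le_fg)
  also have "\<dots> \<lesssim> (UNIV::nat set) \<rightarrow>\<^sub>E carrier (free_group (Pow (B a)))"
    by (rule eqpoll_imp_lepoll[OF eqpoll_sym[OF eq]])
  also have "\<dots> \<lesssim> Pow (B a)" by (rule fg_cube[OF beth_inf[OF aF]])
  also have "\<dots> \<lesssim> B b" by (rule beth_lt[OF assms])
  finally have "Pow (B b) \<lesssim> B b" .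
  then have "B b \<approx> Pow (B b)" by (rule lepoll_antisym[OF lepoll_Pow_self])
  then show False using lesspoll_Pow_self[of "B b"] by (simp add: lesspoll_def)
qed

end

lemma part3:
  fixes r :: "'o rel" and B :: "'o \<Rightarrow> 'c set"
  assumes WO: "Well_order r" and BS: "beth_seq r B" and a: "a \<in> Field r" and b: "b \<in> Field r" and ne: "a \<noteq> b"
  shows "\<not> archipelago (\<lambda>_. free_group (Pow (B a))) \<cong> archipelago (\<lambda>_. free_group (Pow (B b)))"
proof
  assume iso: "archipelago (\<lambda>_. free_group (Pow (B a))) \<cong> archipelago (\<lambda>_. free_group (Pow (B b)))"
  let ?Xa = "(UNIV::nat set) \<rightarrow>\<^sub>E carrier (free_group (Pow (B a)))"
  let ?Xb = "(UNIV::nat set) \<rightarrow>\<^sub>E carrier (free_group (Pow (B b)))"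
  obtain h where "bij_betw h (carrier (archipelago (\<lambda>_. free_group (Pow (B a))))) (carrier (archipelago (\<lambda>_. free_group (Pow (B b)))))"
    using iso by (auto simp: is_iso_def iso_def)
  then have e: "carrier (archipelago (\<lambda>_. free_group (Pow (B a)))) \<approx> carrier (archipelago (\<lambda>_. free_group (Pow (B b))))"
    by (auto simp: eqpoll_def)
  have pa: "carrier (archipelago (\<lambda>_::nat. free_group (Pow (B a)))) \<approx> ?Xa"
    by (rule part1) (simp_all add: free_group_is_group eqpoll_refl)
  have pb: "carrier (archipelago (\<lambda>_::nat. free_group (Pow (B b)))) \<approx> ?Xb"
    by (rule part1) (simp_all add: free_group_is_group eqpoll_refl)
  have "?Xa \<approx> ?Xb" by (rule eqpoll_trans[OF eqpoll_trans[OF eqpoll_sym[OF pa] e] pb])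
  moreover have "wo_less r a b \<or> wo_less r b a"
    using wo_rel.TOTALS[of r] WO a b ne by (auto simp: wo_rel_def wo_less_def)
  ultimately show False using part3_aux[OF WO BS, of a b] part3_aux[OF WO BS, of b a] eqpoll_sym[of ?Xa ?Xb] by blast
qed

theorem theorem9:
  shows "(\<forall>G :: nat \<Rightarrow> 'a monoid.
            (\<forall>n. group (G n)) \<and> (\<forall>n. carrier (G n) \<approx> carrier (G 0)) \<longrightarrow>
            carrier (archipelago G) \<approx> (UNIV :: nat set) \<rightarrow>\<^sub>E carrier (G 0))
       \<and> (\<forall>K :: 'i \<Rightarrow> 'b monoid. \<exists>G :: nat \<Rightarrow> 'b set monoid.
            (\<forall>n. group (G n)) \<and> (\<forall>i. \<not> archipelago G \<cong> K i))
       \<and> (\<forall>(r :: 'o rel) (B :: 'o \<Rightarrow> 'c set). Well_order r \<and> beth_seq r B \<longrightarrow>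
            (\<forall>a \<in> Field r. \<forall>b \<in> Field r. a \<noteq> b \<longrightarrow>
               \<not> archipelago (\<lambda>_. free_group (Pow (B a))) \<cong> archipelago (\<lambda>_. free_group (Pow (B b)))))"
proof (intro conjI allI impI ballI)
  show "carrier (archipelago G) \<approx> (UNIV :: nat set) \<rightarrow>\<^sub>E carrier (G 0)"
    if "(\<forall>n. group (G n)) \<and> (\<forall>n. carrier (G n) \<approx> carrier (G 0))" for G :: "nat \<Rightarrow> 'a monoid"
    using that part1[of G] by blast
  show "\<exists>G :: nat \<Rightarrow> 'b set monoid. (\<forall>n. group (G n)) \<and> (\<forall>i. \<not> archipelago G \<cong> K i)" for K :: "'i \<Rightarrow> 'b monoid"
    by (rule part2)
  show "\<not> archipelago (\<lambda>_. free_group (Pow (B a))) \<cong> archipelago (\<lambda>_. free_group (Pow (B b)))"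
    if "Well_order r \<and> beth_seq r B" "a \<in> Field r" "b \<in> Field r" "a \<noteq> b"
    for r :: "'o rel" and B :: "'o \<Rightarrow> 'c set" and a b
    using part3[of r B a b] that by blast
qed


end
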